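(* Let $\Omega$ be the space of locally finite counting measures on $\mathbb{R}$ with its usual $\sigma$-field, let $\mathbb{P}$ be the law of a stationary Poisson process on $\mathbb{R}$ with intensity 1, and let $N(\omega):=\omega$. Equip $\Omega$ with the flow $\theta_{(a,b)}\omega:=\omega(\cdot+b)$, $(a,b)\in\mathbb{R}^2$ (shift of $\omega$ by $b$). Define random measures on $\mathbb{R}^2$ by $\xi(C):=\sum_{y:\,N(\{y\})>0}\lambda_1(\{x\in\mathbb{R}:(x,y)\in C\})$ (one-dimensional Lebesgue measure on the horizontal lines through the points of $N$ on the $y$-axis) and $\eta:=\lambda_2$ (Lebesgue measure on $\mathbb{R}^2$). Then $\xi$ and $\eta$ are diffuse, jointly stationary and ergodic with common intensity 1, but there is no allocation $\tau:\Omega\times\mathbb{R}^2\to\mathbb{R}^2\cup\{\infty\}$ balancing $\xi$ and $\eta$.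
   Context: An allocation (on $\mathbb{R}^2$ for the flow $(\theta_z)$) is a measurable map $\tau:\Omega\times\mathbb{R}^2\to\mathbb{R}^2\cup\{\infty\}$ with $\tau(\theta_y\omega,x-y)=\tau(\omega,x)-y$ for all $x,y\in\mathbb{R}^2$ and $\mathbb{P}$-a.e. $\omega$. It balances $\xi$ and $\eta$ if a.s. $\xi(\{s:\tau(s)=\infty\})=0$ and $\int\mathbf{1}\{\tau(s)\in C\}\,\xi(ds)=\eta(C)$ for all Borel $C\subset\mathbb{R}^2$. $\lambda_1,\lambda_2$ denote one- and two-dimensional Lebesgue measure. *)

theory Defs
  imports "HOL-Probability.Probability"
begin

text \<open>A locally finite counting measure on R is represented by its point-multiplicity
  function omega :: real => nat, whose support meets every bounded interval in a finite set.\<close>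

definition Omega :: "(real \<Rightarrow> nat) set" where
  "Omega = {\<omega>. \<forall>a b. finite {x \<in> {a..b}. 0 < \<omega> x}}"

definition cnt :: "(real \<Rightarrow> nat) \<Rightarrow> real set \<Rightarrow> ennreal" where
  "cnt \<omega> B = (\<integral>\<^sup>+ x. ennreal (real (\<omega> x)) \<partial>count_space B)"

definition OmegaM :: "(real \<Rightarrow> nat) measure" where
  "OmegaM = sigma Omega
     {{\<omega> \<in> Omega. cnt \<omega> B \<in> A} | B A. B \<in> sets (borel :: real measure) \<and> A \<in> sets (borel :: ennreal measure)}"

definition poisson_law :: "(real \<Rightarrow> nat) measure \<Rightarrow> bool" where
  "poisson_law P \<longleftrightarrow> prob_space P \<and> sets P = sets OmegaM \<and>
     (\<forall>(n::nat) (B :: nat \<Rightarrow> real set) (k :: nat \<Rightarrow> nat).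
        (\<forall>i<n. B i \<in> sets borel \<and> bounded (B i)) \<longrightarrow> disjoint_family_on B {..<n} \<longrightarrow>
        emeasure P {\<omega> \<in> Omega. \<forall>i<n. cnt \<omega> (B i) = of_nat (k i)} =
          (\<Prod>i<n. ennreal (exp (- measure lborel (B i)) * measure lborel (B i) ^ k i / fact (k i))))"

definition theta :: "real \<times> real \<Rightarrow> (real \<Rightarrow> nat) \<Rightarrow> (real \<Rightarrow> nat)" where
  "theta z \<omega> = (\<lambda>t. \<omega> (t + snd z))"

definition xi_fun :: "(real \<Rightarrow> nat) \<Rightarrow> (real \<times> real) set \<Rightarrow> ennreal" where
  "xi_fun \<omega> C = (\<integral>\<^sup>+ y. emeasure lborel {x::real. (x, y) \<in> C} \<partial>count_space {y. 0 < \<omega> y})"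

definition xi :: "(real \<Rightarrow> nat) \<Rightarrow> (real \<times> real) measure" where
  "xi \<omega> = measure_of UNIV (sets borel) (xi_fun \<omega>)"

definition eta :: "(real \<Rightarrow> nat) \<Rightarrow> (real \<times> real) measure" where
  "eta \<omega> = lborel"

text \<open>R^2 united with {infinity} is (real * real) option, None standing for infinity;
  its sigma-field consists of the sets whose trace on R^2 is Borel.\<close>
definition optM :: "(real \<times> real) option measure" where
  "optM = sigma UNIV {A. Some -` A \<in> sets (borel :: (real \<times> real) measure)}"

definition allocation ::
  "(real \<Rightarrow> nat) measure \<Rightarrow> ((real \<Rightarrow> nat) \<Rightarrow> real \<times> real \<Rightarrow> (real \<times> real) option) \<Rightarrow> bool" where
  "allocation P \<tau> \<longleftrightarrow>
     (\<lambda>(\<omega>, x). \<tau> \<omega> x) \<in> measurable (OmegaM \<Otimes>\<^sub>M borel) optM \<and>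
     (AE \<omega> in P. \<forall>x y. \<tau> (theta y \<omega>) (x - y) = map_option (\<lambda>t. t - y) (\<tau> \<omega> x))"

definition balances ::
  "(real \<Rightarrow> nat) measure \<Rightarrow> ((real \<Rightarrow> nat) \<Rightarrow> real \<times> real \<Rightarrow> (real \<times> real) option) \<Rightarrow>
   ((real \<Rightarrow> nat) \<Rightarrow> (real \<times> real) measure) \<Rightarrow> ((real \<Rightarrow> nat) \<Rightarrow> (real \<times> real) measure) \<Rightarrow> bool" where
  "balances P \<tau> \<xi> \<eta> \<longleftrightarrow>
     (AE \<omega> in P. emeasure (\<xi> \<omega>) {s. \<tau> \<omega> s = None} = 0 \<and>
        (\<forall>C \<in> sets (borel :: (real \<times> real) measure).
           (\<integral>\<^sup>+ s. indicator {s. \<exists>c\<in>C. \<tau> \<omega> s = Some c} s \<partial>\<xi> \<omega>) = emeasure (\<eta> \<omega>) C))"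

definition diffuse :: "((real \<Rightarrow> nat) \<Rightarrow> (real \<times> real) measure) \<Rightarrow> bool" where
  "diffuse \<xi> \<longleftrightarrow> (\<forall>\<omega>\<in>Omega. \<forall>z. emeasure (\<xi> \<omega>) {z} = 0)"

definition random_measure :: "((real \<Rightarrow> nat) \<Rightarrow> (real \<times> real) measure) \<Rightarrow> bool" where
  "random_measure \<xi> \<longleftrightarrow> (\<forall>\<omega>\<in>Omega. sets (\<xi> \<omega>) = sets borel) \<and>
     (\<forall>C \<in> sets (borel :: (real \<times> real) measure). (\<lambda>\<omega>. emeasure (\<xi> \<omega>) C) \<in> borel_measurable OmegaM)"

definition jointly_stationary ::
  "(real \<Rightarrow> nat) measure \<Rightarrow> ((real \<Rightarrow> nat) \<Rightarrow> (real \<times> real) measure) \<Rightarrow>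
   ((real \<Rightarrow> nat) \<Rightarrow> (real \<times> real) measure) \<Rightarrow> bool" where
  "jointly_stationary P \<xi> \<eta> \<longleftrightarrow>
     (\<forall>(n::nat) (Cs :: nat \<Rightarrow> (real \<times> real) set) (Ds :: nat \<Rightarrow> (real \<times> real) set) (z :: real \<times> real).
        (\<forall>i<n. Cs i \<in> sets borel \<and> Ds i \<in> sets borel) \<longrightarrow>
        distr P (Pi\<^sub>M {..<n} (\<lambda>_. (borel :: ennreal measure) \<Otimes>\<^sub>M (borel :: ennreal measure)))
          (\<lambda>\<omega>. \<lambda>i\<in>{..<n}. (emeasure (\<xi> \<omega>) ((\<lambda>c. c + z) ` Cs i), emeasure (\<eta> \<omega>) ((\<lambda>c. c + z) ` Ds i)))
        = distr P (Pi\<^sub>M {..<n} (\<lambda>_. (borel :: ennreal measure) \<Otimes>\<^sub>M (borel :: ennreal measure)))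
          (\<lambda>\<omega>. \<lambda>i\<in>{..<n}. (emeasure (\<xi> \<omega>) (Cs i), emeasure (\<eta> \<omega>) (Ds i))))"

definition flow_stationary :: "(real \<Rightarrow> nat) measure \<Rightarrow> bool" where
  "flow_stationary P \<longleftrightarrow> (\<forall>z. theta z \<in> measurable OmegaM OmegaM \<and> distr P OmegaM (theta z) = P)"

definition flow_ergodic :: "(real \<Rightarrow> nat) measure \<Rightarrow> bool" where
  "flow_ergodic P \<longleftrightarrow> (\<forall>A \<in> sets OmegaM. (\<forall>z. theta z -` A \<inter> Omega = A) \<longrightarrow>
       measure P A = 0 \<or> measure P A = 1)"

definition flow_adapted :: "((real \<Rightarrow> nat) \<Rightarrow> (real \<times> real) measure) \<Rightarrow> bool" where
  "flow_adapted \<xi> \<longleftrightarrow> (\<forall>\<omega>\<in>Omega. \<forall>z. \<forall>C \<in> sets (borel :: (real \<times> real) measure).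
       emeasure (\<xi> (theta z \<omega>)) C = emeasure (\<xi> \<omega>) ((\<lambda>c. c + z) ` C))"

definition has_intensity ::
  "(real \<Rightarrow> nat) measure \<Rightarrow> ((real \<Rightarrow> nat) \<Rightarrow> (real \<times> real) measure) \<Rightarrow> real \<Rightarrow> bool" where
  "has_intensity P \<xi> \<gamma> \<longleftrightarrow> (\<forall>C \<in> sets (borel :: (real \<times> real) measure).
       (\<integral>\<^sup>+ \<omega>. emeasure (\<xi> \<omega>) C \<partial>P) = ennreal \<gamma> * emeasure lborel C)"

end

theory Submission
  imports Defs
begin


lemma OmegaM_gen_Pow:
  "{{\<omega> \<in> Omega. cnt \<omega> B \<in> A} | B A. B \<in> sets (borel :: real measure) \<and> A \<in> sets (borel :: ennreal measure)} \<subseteq> Pow Omega"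
  by auto

lemma space_OmegaM[simp]: "space OmegaM = Omega"
  unfolding OmegaM_def by (rule space_measure_of[OF OmegaM_gen_Pow])

lemma sets_OmegaM: "sets OmegaM = sigma_sets Omega
   {{\<omega> \<in> Omega. cnt \<omega> B \<in> A} | B A. B \<in> sets (borel :: real measure) \<and> A \<in> sets (borel :: ennreal measure)}"
  unfolding OmegaM_def by (rule sets_measure_of[OF OmegaM_gen_Pow])

lemma cnt_measurable[measurable]:
  assumes "B \<in> sets borel"
  shows "(\<lambda>\<omega>. cnt \<omega> B) \<in> borel_measurable OmegaM"
proof (rule measurableI)
  fix A :: "ennreal set" assume "A \<in> sets borel"
  then have "(\<lambda>\<omega>. cnt \<omega> B) -` A \<inter> space OmegaM = {\<omega> \<in> Omega. cnt \<omega> B \<in> A}" by auto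
  also have "\<dots> \<in> sets OmegaM" unfolding sets_OmegaM
    using assms \<open>A \<in> sets borel\<close> by (intro sigma_sets.Basic) blast
  finally show "(\<lambda>\<omega>. cnt \<omega> B) -` A \<inter> space OmegaM \<in> sets OmegaM" .
qed auto

definition cm :: "(real \<Rightarrow> nat) \<Rightarrow> real measure" where
  "cm \<omega> = density (count_space UNIV) (\<lambda>x. ennreal (real (\<omega> x)))"

lemma cnt_cm: "cnt \<omega> B = emeasure (cm \<omega>) B"
  unfolding cnt_def cm_def
  by (simp add: emeasure_density nn_integral_count_space_indicator)

lemma sets_cm[simp]: "sets (cm \<omega>) = UNIV"
  by (simp add: cm_def)

lemma cnt_finite_support:
  assumes "finite F" "\<And>x. x \<in> B \<Longrightarrow> \<omega> x > 0 \<Longrightarrow> x \<in> F" "F \<subseteq> B"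
  shows "cnt \<omega> B = of_nat (\<Sum>x\<in>F. \<omega> x)"
proof -
  have "cnt \<omega> B = (\<Sum>x\<in>F. ennreal (real (\<omega> x)))"
    unfolding cnt_def using assms by (intro nn_integral_count_space') auto
  also have "\<dots> = of_nat (\<Sum>x\<in>F. \<omega> x)"
    by (simp add: ennreal_of_nat_eq_real_of_nat of_nat_sum[symmetric] sum_ennreal[symmetric]
        del: of_nat_sum)
  finally show ?thesis .
qed

lemma cnt_finite:
  assumes "\<omega> \<in> Omega" "bounded B"
  shows "\<exists>k. cnt \<omega> B = of_nat k"
proof -
  obtain c where "B \<subseteq> cbox (-c) c" using assms(2) bounded_subset_cbox_symmetric[of B] by auto
  then obtain a b :: real where ab: "B \<subseteq> {a..b}" by auto
  have "finite {x \<in> {a..b}. 0 < \<omega> x}" using assms(1) unfolding Omega_def by auto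
  then have "finite {x \<in> B. 0 < \<omega> x}" by (rule rev_finite_subset) (use ab in auto)
  then have "cnt \<omega> B = of_nat (\<Sum>x\<in>{x\<in>B. 0<\<omega> x}. \<omega> x)"
    by (intro cnt_finite_support) auto
  then show ?thesis by blast
qed

lemma cnt_zero_iff: "cnt \<omega> B = 0 \<longleftrightarrow> (\<forall>x\<in>B. \<omega> x = 0)"
  unfolding cnt_def by (simp add: nn_integral_0_iff_AE AE_count_space)

lemma cnt_ge: "x \<in> B \<Longrightarrow> of_nat (\<omega> x) \<le> cnt \<omega> B"
proof -
  assume "x \<in> B"
  have "cnt \<omega> B = emeasure (cm \<omega>) B" by (rule cnt_cm)
  also have "emeasure (cm \<omega>) {x} \<le> emeasure (cm \<omega>) B" using \<open>x \<in> B\<close> by (intro emeasure_mono) auto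
  moreover have "emeasure (cm \<omega>) {x} = of_nat (\<omega> x)"
    using cnt_finite_support[of "{x}" "{x}" \<omega>] by (simp add: cnt_cm)
  ultimately show ?thesis by simp
qed

lemma cnt_theta: "cnt (theta z \<omega>) B = cnt \<omega> ((\<lambda>x. x + snd z) ` B)"
proof -
  have "bij_betw (\<lambda>x. x + snd z) B ((\<lambda>x. x + snd z) ` B)" by (auto simp: bij_betw_def inj_on_def)
  then show ?thesis unfolding cnt_def theta_def
    by (rule nn_integral_bij_count_space)
qed

lemma theta_Omega: assumes "\<omega> \<in> Omega" shows "theta z \<omega> \<in> Omega"
  unfolding Omega_def theta_def
proof (intro CollectI allI)
  fix a b
  have "finite {x \<in> {a + snd z..b + snd z}. 0 < \<omega> x}" using assms unfolding Omega_def by auto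
  then have "finite ((\<lambda>x. x - snd z) ` {x \<in> {a + snd z..b + snd z}. 0 < \<omega> x})" by auto
  then show "finite {x \<in> {a..b}. 0 < \<omega> (x + snd z)}"
    apply (rule rev_finite_subset)
    apply (auto simp: image_iff)
    subgoal for x by (rule exI[where x="x + snd z"]) auto
    done
qed

lemma borel_translate: fixes B :: "'a::euclidean_space set"
  assumes "B \<in> sets borel" shows "(\<lambda>x. x + c) ` B \<in> sets borel"
proof -
  have "(\<lambda>x. x + c) ` B = (\<lambda>x. x - c) -` B \<inter> space borel" by (auto simp: image_iff intro!: bexI[where x="_ - c"])
  also have "\<dots> \<in> sets borel" using assms by measurable
  finally show ?thesis .
qed

lemma theta_measurable[measurable]: "theta z \<in> OmegaM \<rightarrow>\<^sub>M OmegaM"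
proof -
  have "theta z \<in> measurable OmegaM (measure_of Omega
     {{\<omega> \<in> Omega. cnt \<omega> B \<in> A} | B A. B \<in> sets (borel :: real measure) \<and> A \<in> sets (borel :: ennreal measure)} (\<lambda>_. 0))"
  proof (rule measurable_measure_of[OF OmegaM_gen_Pow])
    show "theta z \<in> space OmegaM \<rightarrow> Omega" using theta_Omega by auto
    fix Y assume "Y \<in> {{\<omega> \<in> Omega. cnt \<omega> B \<in> A} | B A. B \<in> sets (borel :: real measure) \<and> A \<in> sets (borel :: ennreal measure)}"
    then obtain B A where BA: "Y = {\<omega> \<in> Omega. cnt \<omega> B \<in> A}" "B \<in> sets (borel :: real measure)" "A \<in> sets (borel :: ennreal measure)" by blast
    have "theta z -` Y \<inter> space OmegaM = {\<omega> \<in> Omega. cnt \<omega> ((\<lambda>x. x + snd z) ` B) \<in> A}"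
      using BA(1) theta_Omega[of _ z] by (auto simp: cnt_theta)
    also have "\<dots> \<in> sets OmegaM" unfolding sets_OmegaM
      using BA borel_translate by (intro sigma_sets.Basic) blast
    finally show "theta z -` Y \<inter> space OmegaM \<in> sets OmegaM" .
  qed
  then show ?thesis by (simp add: OmegaM_def)
qed


lemma slice_borel:
  assumes "C \<in> sets (borel :: (real \<times> real) measure)"
  shows "{x::real. (x, y) \<in> C} \<in> sets borel"
proof -
  have "(\<lambda>x::real. (x, y)) \<in> borel_measurable borel"
    by (intro borel_measurable_continuous_onI continuous_intros)
  then have "(\<lambda>x::real. (x, y)) -` C \<inter> space borel \<in> sets borel"
    using assms by (rule measurable_sets)
  then show ?thesis by (simp add: vimage_def)
qed

lemma xi_fun_ca: "countably_additive (sets borel) (xi_fun \<omega>)"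
proof (rule countably_additiveI)
  fix A :: "nat \<Rightarrow> (real \<times> real) set"
  assume A: "range A \<subseteq> sets borel" "disjoint_family A" "\<Union> (range A) \<in> sets borel"
  have "xi_fun \<omega> (\<Union> (range A)) = (\<integral>\<^sup>+ y. (\<Sum>i. emeasure lborel {x. (x, y) \<in> A i}) \<partial>count_space {y. 0 < \<omega> y})"
    unfolding xi_fun_def
  proof (intro nn_integral_cong)
    fix y
    have "{x. (x, y) \<in> \<Union> (range A)} = (\<Union>i. {x. (x, y) \<in> A i})" by auto
    moreover have "(\<Sum>i. emeasure lborel {x. (x, y) \<in> A i}) = emeasure lborel (\<Union>i. {x. (x, y) \<in> A i})"
      using A by (intro suminf_emeasure) (auto simp: disjoint_family_on_def intro!: slice_borel)
    ultimately show "emeasure lborel {x. (x, y) \<in> \<Union> (range A)} = (\<Sum>i. emeasure lborel {x. (x, y) \<in> A i})"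
      by simp
  qed
  also have "\<dots> = (\<Sum>i. xi_fun \<omega> (A i))" unfolding xi_fun_def
    by (rule nn_integral_suminf) auto
  finally show "(\<Sum>i. xi_fun \<omega> (A i)) = xi_fun \<omega> (\<Union> (range A))" by simp
qed

lemma xi_fun_positive: "positive (sets borel) (xi_fun \<omega>)"
  unfolding positive_def xi_fun_def by simp

lemma sets_xi[simp]: "sets (xi \<omega>) = sets borel"
  unfolding xi_def using sets.sets_measure_of_eq[of "borel :: (real \<times> real) measure"] by simp

lemma emeasure_xi: "C \<in> sets borel \<Longrightarrow> emeasure (xi \<omega>) C = xi_fun \<omega> C"
  unfolding xi_def
  using emeasure_measure_of_sigma[OF sets.sigma_algebra_axioms[of "borel :: (real \<times> real) measure"] xi_fun_positive xi_fun_ca]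
  by simp

lemma lborel_translate:
  fixes S :: "'a::euclidean_space set"
  assumes "S \<in> sets borel"
  shows "emeasure lborel ((\<lambda>x. x + c) ` S) = emeasure lborel S"
proof -
  have "emeasure lborel S = emeasure (distr lborel borel ((+) (- c))) S" by (simp add: lborel_distr_plus)
  also have "\<dots> = emeasure lborel ((+) (- c) -` S \<inter> space lborel)"
    using assms by (intro emeasure_distr) auto
  also have "(+) (- c) -` S \<inter> space lborel = (\<lambda>x. x + c) ` S"
    by (auto simp: image_iff intro!: bexI[where x="_ - c"])
  finally show ?thesis by simp
qed

lemma diffuse_xi: "diffuse xi"
  unfolding diffuse_def
proof (intro ballI allI)
  fix \<omega> :: "real \<Rightarrow> nat" and z :: "real \<times> real"
  have "emeasure (xi \<omega>) {z} = xi_fun \<omega> {z}" by (intro emeasure_xi) auto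
  also have "\<dots> = 0" unfolding xi_fun_def
  proof (intro nn_integral_zero')
    show "AE y in count_space {y. 0 < \<omega> y}. emeasure lborel {x. (x, y) \<in> {z}} = 0"
    proof (intro AE_I2)
      fix y
      have "{x. (x, y) \<in> {z}} \<subseteq> {fst z}" by auto
      then have "emeasure lborel {x. (x, y) \<in> {z}} \<le> emeasure lborel {fst z}"
        by (intro emeasure_mono) auto
      then show "emeasure lborel {x. (x, y) \<in> {z}} = 0" by simp
    qed
  qed
  finally show "emeasure (xi \<omega>) {z} = 0" .
qed

lemma diffuse_eta: "diffuse eta"
  unfolding diffuse_def eta_def by simp

lemma flow_adapted_eta: "flow_adapted eta"
  unfolding flow_adapted_def eta_def by (auto simp: lborel_translate)

lemma flow_adapted_xi: "flow_adapted xi"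
  unfolding flow_adapted_def
proof (intro ballI allI)
  fix \<omega> :: "real \<Rightarrow> nat" and z :: "real \<times> real" and C :: "(real \<times> real) set"
  assume C: "C \<in> sets borel"
  obtain a b where z: "z = (a, b)" by (cases z)
  have Cz: "(\<lambda>c. c + z) ` C \<in> sets borel" using C by (rule borel_translate)
  have bij: "bij_betw (\<lambda>y. y + b) {y. 0 < \<omega> (y + b)} {y. 0 < \<omega> y}"
    by (rule bij_betwI[where g="\<lambda>y. y - b"]) auto
  have "emeasure (xi \<omega>) ((\<lambda>c. c + z) ` C) = xi_fun \<omega> ((\<lambda>c. c + z) ` C)" using Cz by (rule emeasure_xi)
  also have "\<dots> = (\<integral>\<^sup>+ y. emeasure lborel {x. (x, y + b) \<in> (\<lambda>c. c + z) ` C} \<partial>count_space {y. 0 < \<omega> (y + b)})"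
    unfolding xi_fun_def by (rule nn_integral_bij_count_space[OF bij, symmetric])
  also have "\<dots> = (\<integral>\<^sup>+ y. emeasure lborel {x. (x, y) \<in> C} \<partial>count_space {y. 0 < \<omega> (y + b)})"
  proof (intro nn_integral_cong)
    fix y
    have "{x. (x, y + b) \<in> (\<lambda>c. c + z) ` C} = (\<lambda>x. x + a) ` {x. (x, y) \<in> C}"
    proof (intro set_eqI iffI)
      fix x assume "x \<in> {x. (x, y + b) \<in> (\<lambda>c. c + z) ` C}"
      then obtain c where c: "c \<in> C" "(x, y + b) = c + z" by auto
      then have "c = (x - a, y)" by (cases c) (auto simp: z)
      with c have "x - a \<in> {x. (x, y) \<in> C}" by auto
      then show "x \<in> (\<lambda>x. x + a) ` {x. (x, y) \<in> C}" by (rule rev_image_eqI) simp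
    next
      fix x assume "x \<in> (\<lambda>x. x + a) ` {x. (x, y) \<in> C}"
      then obtain u where u: "(u, y) \<in> C" "x = u + a" by auto
      have "(x, y + b) = (u, y) + z" using u by (simp add: z)
      with u show "x \<in> {x. (x, y + b) \<in> (\<lambda>c. c + z) ` C}" by (auto intro!: rev_image_eqI)
    qed
    then show "emeasure lborel {x. (x, y + b) \<in> (\<lambda>c. c + z) ` C} = emeasure lborel {x. (x, y) \<in> C}"
      using lborel_translate[OF slice_borel[OF C]] by simp
  qed
  also have "\<dots> = xi_fun (theta z \<omega>) C" unfolding xi_fun_def theta_def z by simp
  also have "\<dots> = emeasure (xi (theta z \<omega>)) C" using C by (rule emeasure_xi[symmetric])
  finally show "emeasure (xi (theta z \<omega>)) C = emeasure (xi \<omega>) ((\<lambda>c. c + z) ` C)" by simp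
qed


definition Ev :: "(nat \<Rightarrow> real set) \<Rightarrow> (nat \<Rightarrow> nat) \<Rightarrow> nat \<Rightarrow> (real \<Rightarrow> nat) set" where
  "Ev B k n = {\<omega> \<in> Omega. \<forall>i<n. cnt \<omega> (B i) = of_nat (k i)}"

definition EgenR :: "real set \<Rightarrow> (real \<Rightarrow> nat) set set" where
  "EgenR R = {Ev B k n | B k n. \<forall>i<n. B i \<in> sets borel \<and> bounded (B i) \<and> B i \<subseteq> R}"

definition pois :: "(nat \<Rightarrow> real set) \<Rightarrow> (nat \<Rightarrow> nat) \<Rightarrow> nat \<Rightarrow> ennreal" where
  "pois D v N = (\<Prod>i<N. ennreal (exp (- measure lborel (D i)) * measure lborel (D i) ^ v i / fact (v i)))"

lemma Ev_subset: "Ev B k n \<subseteq> Omega" by (auto simp: Ev_def)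

lemma Ev_0[simp]: "Ev B k 0 = Omega" by (auto simp: Ev_def)

lemma EgenR_Pow: "EgenR R \<subseteq> Pow Omega" by (auto simp: EgenR_def Ev_def)

lemma Omega_EgenR: "Omega \<in> EgenR R"
  unfolding EgenR_def by (rule CollectI, rule exI[where x="\<lambda>_. {}"], rule exI[where x="\<lambda>_. 0"], rule exI[where x=0]) simp

lemma EgenR_mono: "R \<subseteq> R' \<Longrightarrow> EgenR R \<subseteq> EgenR R'"
  unfolding EgenR_def by blast

definition catf :: "nat \<Rightarrow> (nat \<Rightarrow> 'a) \<Rightarrow> (nat \<Rightarrow> 'a) \<Rightarrow> nat \<Rightarrow> 'a" where
  "catf n f g i = (if i < n then f i else g (i - n))"

lemma Ev_Int: "Ev B k n \<inter> Ev C l m = Ev (catf n B C) (catf n k l) (n + m)"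
proof (intro set_eqI iffI)
  fix \<omega> assume "\<omega> \<in> Ev B k n \<inter> Ev C l m"
  then show "\<omega> \<in> Ev (catf n B C) (catf n k l) (n + m)"
    unfolding Ev_def catf_def by auto
next
  fix \<omega> assume *: "\<omega> \<in> Ev (catf n B C) (catf n k l) (n + m)"
  then have om: "\<omega> \<in> Omega" and all: "\<forall>i<n+m. cnt \<omega> (catf n B C i) = of_nat (catf n k l i)"
    by (simp_all add: Ev_def)
  have "\<omega> \<in> Ev B k n" unfolding Ev_def
  proof (intro CollectI conjI allI impI om)
    fix i assume "i < n"
    then have "cnt \<omega> (catf n B C i) = of_nat (catf n k l i)" using all by simp
    with \<open>i < n\<close> show "cnt \<omega> (B i) = of_nat (k i)" by (simp add: catf_def)
  qed
  moreover have "\<omega> \<in> Ev C l m" unfolding Ev_def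
  proof (intro CollectI conjI allI impI om)
    fix i assume "i < m"
    then have "cnt \<omega> (catf n B C (n + i)) = of_nat (catf n k l (n + i))" using all by simp
    then show "cnt \<omega> (C i) = of_nat (l i)" by (simp add: catf_def)
  qed
  ultimately show "\<omega> \<in> Ev B k n \<inter> Ev C l m" by simp
qed

lemma Int_stable_EgenR: "Int_stable (EgenR R)"
proof (rule Int_stableI)
  fix X Y assume "X \<in> EgenR R" "Y \<in> EgenR R"
  then obtain B k n C l m where X: "X = Ev B k n" "\<forall>i<n. B i \<in> sets borel \<and> bounded (B i) \<and> B i \<subseteq> R"
    and Y: "Y = Ev C l m" "\<forall>i<m. C i \<in> sets borel \<and> bounded (C i) \<and> C i \<subseteq> R"
    unfolding EgenR_def by blast
  have "\<forall>i<n+m. catf n B C i \<in> sets borel \<and> bounded (catf n B C i) \<and> catf n B C i \<subseteq> R"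
    using X(2) Y(2) by (auto simp: catf_def)
  then show "X \<inter> Y \<in> EgenR R" unfolding EgenR_def X Y Ev_Int
    by (intro CollectI exI[where x="catf n B C"] exI[where x="catf n k l"] exI[where x="n+m"]) simp
qed

lemma cnt_eq_sets:
  assumes "B \<in> sets borel"
  shows "{\<omega> \<in> space OmegaM. cnt \<omega> B = c} \<in> sets OmegaM"
proof -
  have "(\<lambda>\<omega>. cnt \<omega> B) -` {c} \<inter> space OmegaM \<in> sets OmegaM"
    by (rule measurable_sets[OF cnt_measurable[OF assms]]) simp
  also have "(\<lambda>\<omega>. cnt \<omega> B) -` {c} \<inter> space OmegaM = {\<omega> \<in> space OmegaM. cnt \<omega> B = c}" by auto
  finally show ?thesis .
qed

lemma Ev_sets:
  assumes "\<forall>i<n. B i \<in> sets borel"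
  shows "Ev B k n \<in> sets OmegaM"
proof -
  have "Ev B k n = {\<omega> \<in> space OmegaM. \<forall>i\<in>{..<n}. cnt \<omega> (B i) = of_nat (k i)}"
    unfolding Ev_def space_OmegaM by blast
  also have "\<dots> \<in> sets OmegaM"
    by (rule sets.sets_Collect_finite_All) (use assms cnt_eq_sets in auto)
  finally show ?thesis .
qed

lemma EgenR_sets: "EgenR R \<subseteq> sets OmegaM"
  unfolding EgenR_def using Ev_sets by auto

lemma cnt_SUP: "cnt \<omega> B = (SUP m. cnt \<omega> (B \<inter> {- real m..real m}))"
proof -
  have "(SUP m. emeasure (cm \<omega>) (B \<inter> {- real m..real m})) = emeasure (cm \<omega>) (\<Union>m. B \<inter> {- real m..real m})"
    by (intro SUP_emeasure_incseq) (auto simp: incseq_def)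
  also have "(\<Union>m. B \<inter> {- real m..real m}) = B"
  proof (intro set_eqI iffI)
    fix x assume "x \<in> B"
    obtain m :: nat where "\<bar>x\<bar> \<le> real m" using real_arch_simple by blast
    with \<open>x \<in> B\<close> have "x \<in> B \<inter> {- real m..real m}" by auto
    then show "x \<in> (\<Union>m. B \<inter> {- real m..real m})" by blast
  qed auto
  finally show ?thesis by (simp add: cnt_cm)
qed

lemma sets_OmegaM_Egen: "sets OmegaM = sigma_sets Omega (EgenR UNIV)"
proof
  show "sigma_sets Omega (EgenR UNIV) \<subseteq> sets OmegaM"
    using sets.sigma_sets_subset'[OF EgenR_sets, of Omega] sets.top[of OmegaM] by simp
next
  let ?M = "sigma Omega (EgenR UNIV)"
  have sp: "space ?M = Omega" by (rule space_measure_of[OF EgenR_Pow])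
  have st: "sets ?M = sigma_sets Omega (EgenR UNIV)" by (rule sets_measure_of[OF EgenR_Pow])
  have meas: "(\<lambda>\<omega>. cnt \<omega> B) \<in> borel_measurable ?M" if B: "B \<in> sets borel" for B
  proof -
    have g: "(\<lambda>\<omega>. cnt \<omega> (B \<inter> {- real m..real m})) \<in> borel_measurable ?M" for m
    proof (rule measurableI)
      fix A :: "ennreal set" assume "A \<in> sets borel"
      let ?F = "\<lambda>k. if of_nat k \<in> A then Ev (\<lambda>_. B \<inter> {- real m..real m}) (\<lambda>_. k) 1 else {}"
      have "(\<lambda>\<omega>. cnt \<omega> (B \<inter> {- real m..real m})) -` A \<inter> space ?M = (\<Union>k. ?F k)"
      proof (intro set_eqI iffI)
        fix \<omega> assume \<omega>: "\<omega> \<in> (\<lambda>\<omega>. cnt \<omega> (B \<inter> {- real m..real m})) -` A \<inter> space ?M"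
        then have "\<omega> \<in> Omega" by (simp add: sp)
        have bd: "bounded (B \<inter> {- real m..real m})" by (rule bounded_Int) simp
        obtain k where "cnt \<omega> (B \<inter> {- real m..real m}) = of_nat k"
          using cnt_finite[OF \<open>\<omega> \<in> Omega\<close> bd] by blast
        with \<omega> \<open>\<omega> \<in> Omega\<close> show "\<omega> \<in> (\<Union>k. ?F k)" by (auto simp: Ev_def intro!: exI[where x=k])
      qed (auto simp: Ev_def sp split: if_splits)
      also have "\<dots> \<in> sets ?M" unfolding st
      proof (intro sigma_sets.Union)
        fix k show "?F k \<in> sigma_sets Omega (EgenR UNIV)"
        proof (cases "of_nat k \<in> A")
          case True
          have "Ev (\<lambda>_. B \<inter> {- real m..real m}) (\<lambda>_. k) 1 \<in> EgenR UNIV"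
            unfolding EgenR_def
            apply (rule CollectI)
            apply (rule exI[where x="\<lambda>_. B \<inter> {- real m..real m}"], rule exI[where x="\<lambda>_. k"], rule exI[where x=1])
            using B by (auto intro: bounded_Int)
          then show ?thesis using True by (auto intro: sigma_sets.Basic)
        qed (simp add: sigma_sets.Empty)
      qed
      finally show "(\<lambda>\<omega>. cnt \<omega> (B \<inter> {- real m..real m})) -` A \<inter> space ?M \<in> sets ?M" .
    qed auto
    have "(\<lambda>\<omega>. SUP m. cnt \<omega> (B \<inter> {- real m..real m})) \<in> borel_measurable ?M"
      using g by measurable
    then show ?thesis by (simp add: cnt_SUP[symmetric])
  qed
  show "sets OmegaM \<subseteq> sigma_sets Omega (EgenR UNIV)" unfolding sets_OmegaM
  proof (rule sigma_sets_mono)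
    show "{{\<omega> \<in> Omega. cnt \<omega> B \<in> A} | B A. B \<in> sets (borel :: real measure) \<and> A \<in> sets (borel :: ennreal measure)}
       \<subseteq> sigma_sets Omega (EgenR UNIV)"
    proof clarify
      fix B :: "real set" and A :: "ennreal set" assume BA: "B \<in> sets borel" "A \<in> sets borel"
      have "(\<lambda>\<omega>. cnt \<omega> B) -` A \<inter> space ?M \<in> sets ?M" using meas[OF BA(1)] BA(2) by (rule measurable_sets)
      moreover have "(\<lambda>\<omega>. cnt \<omega> B) -` A \<inter> space ?M = {\<omega> \<in> Omega. cnt \<omega> B \<in> A}" by (auto simp: sp)
      ultimately show "{\<omega> \<in> Omega. cnt \<omega> B \<in> A} \<in> sigma_sets Omega (EgenR UNIV)" by (simp add: st)
    qed
  qed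
qed


lemma ennreal_of_nat_inj: "(of_nat a :: ennreal) = of_nat b \<longleftrightarrow> a = b"
  by simp

lemma Ev_disj:
  assumes "v \<in> {..<N} \<rightarrow>\<^sub>E (UNIV :: nat set)" "v' \<in> {..<N} \<rightarrow>\<^sub>E (UNIV :: nat set)" "v \<noteq> v'"
  shows "Ev D v N \<inter> Ev D v' N = {}"
proof -
  obtain j where j: "j < N" "v j \<noteq> v' j"
    using assms PiE_ext[OF assms(1,2)] by auto
  show ?thesis
  proof (rule ccontr)
    assume "Ev D v N \<inter> Ev D v' N \<noteq> {}"
    then obtain \<omega> where "\<omega> \<in> Ev D v N" "\<omega> \<in> Ev D v' N" by blast
    then have "cnt \<omega> (D j) = of_nat (v j)" "cnt \<omega> (D j) = of_nat (v' j)" using j by (auto simp: Ev_def)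
    then show False using j by simp
  qed
qed

lemma cnt_sum:
  assumes "disjoint_family_on D J" "finite J"
  shows "cnt \<omega> (\<Union>j\<in>J. D j) = (\<Sum>j\<in>J. cnt \<omega> (D j))"
  unfolding cnt_cm using assms by (intro sum_emeasure[symmetric]) auto

lemma cnt_mono: "A \<subseteq> B \<Longrightarrow> cnt \<omega> A \<le> cnt \<omega> B"
  unfolding cnt_cm by (intro emeasure_mono) auto

lemma decomp:
  fixes B :: "nat \<Rightarrow> real set"
  assumes B: "\<forall>i<n. B i \<in> sets borel \<and> bounded (B i)"
  obtains N D V where "\<forall>j<N. D j \<in> sets borel \<and> bounded (D j) \<and> D j \<subseteq> (\<Union>i<n. B i)"
    "disjoint_family_on D {..<N}" "finite V" "V \<subseteq> {..<N} \<rightarrow>\<^sub>E (UNIV :: nat set)"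
    "Ev B k n = (\<Union>v\<in>V. Ev D v N)"
proof -
  let ?S = "{..<n} \<rightarrow>\<^sub>E (UNIV :: bool set)"
  have fS: "finite ?S" by (simp add: finite_PiE)
  define N where "N = card ?S"
  obtain h where h: "bij_betw h {0..<N} ?S" using ex_bij_betw_nat_finite[OF fS] unfolding N_def by blast
  define U where "U = (\<Union>i<n. B i)"
  define D where "D j = {x \<in> U. \<forall>i\<in>{..<n}. (x \<in> B i) = h j i}" for j
  have hS: "h j \<in> ?S" if "j < N" for j by (rule bij_betw_apply[OF h]) (use that in simp)
  have U_borel: "U \<in> sets borel" unfolding U_def using B by auto
  have U_bounded: "bounded U" unfolding U_def using B by (intro bounded_UN) auto
  have D_borel: "D j \<in> sets borel" for j
  proof -
    have "D j = {x \<in> space borel. x \<in> U \<and> (\<forall>i\<in>{..<n}. (x \<in> B i) = h j i)}" by (simp add: D_def)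
    also have "\<dots> \<in> sets borel"
    proof (rule sets.sets_Collect_conj)
      show "{x \<in> space borel. x \<in> U} \<in> sets borel" using U_borel by simp
      show "{x \<in> space borel. \<forall>i\<in>{..<n}. (x \<in> B i) = h j i} \<in> sets borel"
      proof (rule sets.sets_Collect_finite_All)
        fix i assume "i \<in> {..<n}"
        have "{x \<in> space borel. (x \<in> B i) = h j i} = (if h j i then B i else UNIV - B i)" by auto
        then show "{x \<in> space borel. (x \<in> B i) = h j i} \<in> sets borel"
          using B \<open>i \<in> {..<n}\<close> by auto
      qed simp
    qed
    finally show ?thesis .
  qed
  have D_sub: "D j \<subseteq> U" for j by (auto simp: D_def)
  have D_bounded: "bounded (D j)" for j using D_sub U_bounded by (rule bounded_subset[rotated])
  have D_sub_B: "D j \<subseteq> B i" if "i < n" "h j i" for i j using that by (auto simp: D_def)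
  have disj: "disjoint_family_on D {..<N}"
  proof (unfold disjoint_family_on_def, intro ballI impI)
    fix j j' assume jj: "j \<in> {..<N}" "j' \<in> {..<N}" "j \<noteq> j'"
    then have "h j \<noteq> h j'" using bij_betw_imp_inj_on[OF h] unfolding inj_on_def by auto
    then obtain i where i: "i < n" "h j i \<noteq> h j' i" using PiE_ext[OF hS hS, of j j'] jj by auto
    show "D j \<inter> D j' = {}"
    proof (rule ccontr)
      assume "D j \<inter> D j' \<noteq> {}"
      then obtain x where "x \<in> D j" "x \<in> D j'" by blast
      then have "(x \<in> B i) = h j i" "(x \<in> B i) = h j' i" using i unfolding D_def by blast+
      then show False using i by simp
    qed
  qed
  define J where "J i = {j. j < N \<and> h j i}" for i
  have J_fin: "finite (J i)" for i by (auto simp: J_def)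
  have cover: "\<exists>j<N. x \<in> D j \<and> h j i" if "i < n" "x \<in> B i" for i x
  proof -
    let ?\<sigma> = "\<lambda>l\<in>{..<n}. x \<in> B l"
    have "?\<sigma> \<in> ?S" by auto
    then have "?\<sigma> \<in> h ` {0..<N}" using bij_betw_imp_surj_on[OF h] by simp
    then obtain j where j: "j \<in> {0..<N}" "h j = ?\<sigma>" by (auto simp only: image_iff)
    have "x \<in> U" using that unfolding U_def by blast
    then have "x \<in> D j" using j by (auto simp: D_def)
    moreover have "h j i" using j that by simp
    ultimately show ?thesis using j by auto
  qed
  have B_eq: "B i = (\<Union>j\<in>J i. D j)" if iN: "i < n" for i
  proof
    show "B i \<subseteq> (\<Union>j\<in>J i. D j)"
    proof
      fix x assume "x \<in> B i"
      then obtain j where "j < N" "x \<in> D j" "h j i" using cover[OF iN] by blast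
      then show "x \<in> (\<Union>j\<in>J i. D j)" by (auto simp: J_def)
    qed
    show "(\<Union>j\<in>J i. D j) \<subseteq> B i" using D_sub_B[OF iN] by (auto simp: J_def)
  qed
  have disjJ: "disjoint_family_on D (J i)" for i
    using disj by (rule disjoint_family_on_mono[rotated]) (auto simp: J_def)
  have cntB: "cnt \<omega> (B i) = (\<Sum>j\<in>J i. cnt \<omega> (D j))" if "i < n" for i \<omega>
    using B_eq[OF that] cnt_sum[OF disjJ J_fin] by simp
  define K where "K = (\<Sum>i<n. k i)"
  define V where "V = {v \<in> {..<N} \<rightarrow>\<^sub>E {..K}. \<forall>i<n. (\<Sum>j\<in>J i. v j) = k i}"
  have finV: "finite V" unfolding V_def by (rule finite_subset[OF _ finite_PiE[of "{..<N}" "\<lambda>_. {..K}"]]) auto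
  have V_sub: "V \<subseteq> {..<N} \<rightarrow>\<^sub>E (UNIV :: nat set)" unfolding V_def by auto
  have Ev_eq: "Ev B k n = (\<Union>v\<in>V. Ev D v N)"
  proof (intro set_eqI iffI)
    fix \<omega> assume \<omega>: "\<omega> \<in> Ev B k n"
    then have om: "\<omega> \<in> Omega" and cB: "\<And>i. i < n \<Longrightarrow> cnt \<omega> (B i) = of_nat (k i)" by (auto simp: Ev_def)
    define c where "c j = (SOME c. cnt \<omega> (D j) = of_nat c)" for j
    have c: "cnt \<omega> (D j) = of_nat (c j)" for j
      unfolding c_def using cnt_finite[OF om D_bounded[of j]] by (rule someI_ex)
    define v where "v = restrict c {..<N}"
    have v_le: "v j \<le> K" if "j < N" for j
    proof (cases "c j = 0")
      case False
      then have "cnt \<omega> (D j) \<noteq> 0" using c[of j] by simp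
      then obtain x where x: "x \<in> D j" using cnt_zero_iff[of \<omega> "D j"] by auto
      then have "x \<in> U" using D_sub by auto
      then obtain i where i: "i < n" "x \<in> B i" unfolding U_def by auto
      then have "h j i" using x by (auto simp: D_def)
      then have "cnt \<omega> (D j) \<le> cnt \<omega> (B i)" using D_sub_B[OF i(1)] by (intro cnt_mono) auto
      then have "c j \<le> k i" using c[of j] cB[OF i(1)] by simp
      also have "k i \<le> K" unfolding K_def using i(1) by (intro member_le_sum) auto
      finally show ?thesis using that by (simp add: v_def)
    qed (use that in \<open>simp add: v_def\<close>)
    have "v \<in> V" unfolding V_def
    proof (intro CollectI conjI allI impI)
      show "v \<in> {..<N} \<rightarrow>\<^sub>E {..K}" using v_le by (auto simp: v_def)
      fix i assume i: "i < n"
      have "(of_nat (\<Sum>j\<in>J i. v j) :: ennreal) = (\<Sum>j\<in>J i. cnt \<omega> (D j))"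
        by (simp add: c v_def J_def)
      also have "\<dots> = of_nat (k i)" using cntB[OF i] cB[OF i] by simp
      finally have eq: "(of_nat (\<Sum>j\<in>J i. v j) :: ennreal) = of_nat (k i)" .
      show "(\<Sum>j\<in>J i. v j) = k i" using eq by (simp only: ennreal_of_nat_inj)
    qed
    moreover have "\<omega> \<in> Ev D v N" using om c by (auto simp: Ev_def v_def)
    ultimately show "\<omega> \<in> (\<Union>v\<in>V. Ev D v N)" by blast
  next
    fix \<omega> assume "\<omega> \<in> (\<Union>v\<in>V. Ev D v N)"
    then obtain v where v: "v \<in> V" "\<omega> \<in> Ev D v N" by blast
    then have om: "\<omega> \<in> Omega" and cD: "\<And>j. j < N \<Longrightarrow> cnt \<omega> (D j) = of_nat (v j)" by (auto simp: Ev_def)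
    show "\<omega> \<in> Ev B k n" unfolding Ev_def
    proof (intro CollectI conjI allI impI om)
      fix i assume i: "i < n"
      have "cnt \<omega> (B i) = (\<Sum>j\<in>J i. cnt \<omega> (D j))" by (rule cntB[OF i])
      also have "\<dots> = (\<Sum>j\<in>J i. of_nat (v j))" by (intro sum.cong refl) (auto simp: J_def cD)
      also have "\<dots> = of_nat (\<Sum>j\<in>J i. v j)" by simp
      also have "(\<Sum>j\<in>J i. v j) = k i" using v(1) i by (auto simp: V_def)
      finally show "cnt \<omega> (B i) = of_nat (k i)" .
    qed
  qed
  show thesis
  proof (rule that[of N D V])
    show "\<forall>j<N. D j \<in> sets borel \<and> bounded (D j) \<and> D j \<subseteq> (\<Union>i<n. B i)"
      using D_borel D_bounded D_sub unfolding U_def by blast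
  qed (fact disj finV V_sub Ev_eq)+
qed

lemma poisson_law_sets: "poisson_law P \<Longrightarrow> sets P = sets OmegaM"
  by (simp add: poisson_law_def)

lemma poisson_law_space: "poisson_law P \<Longrightarrow> space P = Omega"
  using sets_eq_imp_space_eq[OF poisson_law_sets] by simp

lemma poisson_law_prob: "poisson_law P \<Longrightarrow> prob_space P"
  by (simp add: poisson_law_def)

lemma poisson_Ev:
  assumes "poisson_law P" "\<forall>j<N. D j \<in> sets borel \<and> bounded (D j)" "disjoint_family_on D {..<N}"
  shows "emeasure P (Ev D v N) = pois D v N"
proof -
  have "\<forall>(n::nat) (B :: nat \<Rightarrow> real set) (k :: nat \<Rightarrow> nat).
        (\<forall>i<n. B i \<in> sets borel \<and> bounded (B i)) \<longrightarrow> disjoint_family_on B {..<n} \<longrightarrow>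
        emeasure P {\<omega> \<in> Omega. \<forall>i<n. cnt \<omega> (B i) = of_nat (k i)} =
          (\<Prod>i<n. ennreal (exp (- measure lborel (B i)) * measure lborel (B i) ^ k i / fact (k i)))"
    using assms(1) by (simp add: poisson_law_def)
  then have "emeasure P {\<omega> \<in> Omega. \<forall>i<N. cnt \<omega> (D i) = of_nat (v i)} =
          (\<Prod>i<N. ennreal (exp (- measure lborel (D i)) * measure lborel (D i) ^ v i / fact (v i)))"
    using assms(2,3) by blast
  then show ?thesis by (simp add: Ev_def pois_def)
qed

lemma poisson_sum:
  assumes P: "poisson_law P" and D: "\<forall>j<N. D j \<in> sets borel \<and> bounded (D j)" "disjoint_family_on D {..<N}"
    and V: "finite V" "V \<subseteq> {..<N} \<rightarrow>\<^sub>E (UNIV :: nat set)"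
  shows "emeasure P (\<Union>v\<in>V. Ev D v N) = (\<Sum>v\<in>V. pois D v N)"
proof -
  have "(\<Sum>v\<in>V. emeasure P (Ev D v N)) = emeasure P (\<Union>v\<in>V. Ev D v N)"
  proof (rule sum_emeasure)
    show "(\<lambda>v. Ev D v N) ` V \<subseteq> sets P" using Ev_sets D(1) poisson_law_sets[OF P] by auto
    show "disjoint_family_on (\<lambda>v. Ev D v N) V"
      unfolding disjoint_family_on_def using V(2) Ev_disj by blast
  qed fact
  moreover have "(\<Sum>v\<in>V. emeasure P (Ev D v N)) = (\<Sum>v\<in>V. pois D v N)"
    using poisson_Ev[OF P D] by simp
  ultimately show ?thesis by simp
qed

lemma poisson_unique:
  assumes P: "poisson_law P" and Q: "poisson_law Q"
  shows "P = Q"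
proof (rule measure_eqI_generator_eq[OF Int_stable_EgenR[of UNIV] EgenR_Pow[of UNIV], where M=P and N=Q and A="\<lambda>_. Omega"])
  fix X assume "X \<in> EgenR UNIV"
  then obtain B k n where X: "X = Ev B k n" and B: "\<forall>i<n. B i \<in> sets borel \<and> bounded (B i)"
    unfolding EgenR_def by blast
  obtain N D V where D: "\<forall>j<N. D j \<in> sets borel \<and> bounded (D j) \<and> D j \<subseteq> (\<Union>i<n. B i)"
    "disjoint_family_on D {..<N}" "finite V" "V \<subseteq> {..<N} \<rightarrow>\<^sub>E (UNIV :: nat set)"
    "Ev B k n = (\<Union>v\<in>V. Ev D v N)"
    using decomp[OF B, of k] by blast
  have D1: "\<forall>j<N. D j \<in> sets borel \<and> bounded (D j)" using D(1) by blast
  show "emeasure P X = emeasure Q X"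
    unfolding X D(5) poisson_sum[OF P D1 D(2,3,4)] poisson_sum[OF Q D1 D(2,3,4)] ..
next
  show "sets P = sigma_sets Omega (EgenR UNIV)" using poisson_law_sets[OF P] sets_OmegaM_Egen by simp
  show "sets Q = sigma_sets Omega (EgenR UNIV)" using poisson_law_sets[OF Q] sets_OmegaM_Egen by simp
  show "range (\<lambda>_. Omega) \<subseteq> EgenR UNIV" using Omega_EgenR by blast
  show "(\<Union>i::nat. Omega) = Omega" by simp
  fix i :: nat
  have "emeasure P (space P) = 1" using poisson_law_prob[OF P] by (simp add: prob_space.emeasure_space_1)
  then show "emeasure P Omega \<noteq> \<infinity>" using poisson_law_space[OF P] by simp
qed

lemma theta_vimage_Ev: "theta z -` Ev B k n \<inter> Omega = Ev (\<lambda>i. (\<lambda>x. x + snd z) ` B i) k n"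
proof (intro set_eqI iffI)
  fix \<omega> assume "\<omega> \<in> theta z -` Ev B k n \<inter> Omega"
  then show "\<omega> \<in> Ev (\<lambda>i. (\<lambda>x. x + snd z) ` B i) k n" unfolding Ev_def by (simp add: cnt_theta)
next
  fix \<omega> assume *: "\<omega> \<in> Ev (\<lambda>i. (\<lambda>x. x + snd z) ` B i) k n"
  then have "\<omega> \<in> Omega" by (simp add: Ev_def)
  then have "theta z \<omega> \<in> Omega" by (rule theta_Omega)
  with * \<open>\<omega> \<in> Omega\<close> show "\<omega> \<in> theta z -` Ev B k n \<inter> Omega" unfolding Ev_def by (simp add: cnt_theta)
qed

lemma measure_lborel_translate:
  fixes S :: "real set" assumes "S \<in> sets borel"
  shows "measure lborel ((\<lambda>x. x + c) ` S) = measure lborel S"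
  using lborel_translate[OF assms] by (simp add: measure_def)

lemma poisson_theta:
  assumes P: "poisson_law P"
  shows "poisson_law (distr P OmegaM (theta z))"
proof -
  have mt: "theta z \<in> P \<rightarrow>\<^sub>M OmegaM"
    using theta_measurable measurable_cong_sets[OF poisson_law_sets[OF P] refl] by blast
  have ps: "prob_space (distr P OmegaM (theta z))"
    using prob_space.prob_space_distr[OF poisson_law_prob[OF P] mt] .
  show ?thesis unfolding poisson_law_def
  proof (intro conjI ps allI impI)
    show "sets (distr P OmegaM (theta z)) = sets OmegaM" by simp
    fix n :: nat and B :: "nat \<Rightarrow> real set" and k :: "nat \<Rightarrow> nat"
    assume B: "\<forall>i<n. B i \<in> sets borel \<and> bounded (B i)" and dj: "disjoint_family_on B {..<n}"
    define B' where "B' i = (\<lambda>x. x + snd z) ` B i" for i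
    have B': "\<forall>i<n. B' i \<in> sets borel \<and> bounded (B' i)"
    proof (intro allI impI conjI)
      fix i assume "i < n"
      then show "B' i \<in> sets borel" unfolding B'_def using B borel_translate by blast
      have "B' i = (\<lambda>x. snd z + x) ` B i" unfolding B'_def by (simp add: add.commute)
      then show "bounded (B' i)" using B \<open>i < n\<close> bounded_translation by metis
    qed
    have dj': "disjoint_family_on B' {..<n}"
      using dj unfolding disjoint_family_on_def B'_def by (auto; blast)
    have "emeasure (distr P OmegaM (theta z)) {\<omega> \<in> Omega. \<forall>i<n. cnt \<omega> (B i) = of_nat (k i)}
       = emeasure (distr P OmegaM (theta z)) (Ev B k n)" by (simp add: Ev_def)
    also have "\<dots> = emeasure P (theta z -` Ev B k n \<inter> space P)"
      using B by (intro emeasure_distr[OF mt] Ev_sets) auto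
    also have "theta z -` Ev B k n \<inter> space P = Ev B' k n"
      unfolding poisson_law_space[OF P] theta_vimage_Ev B'_def ..
    also have "emeasure P (Ev B' k n) = pois B' k n" using poisson_Ev[OF P B' dj'] .
    also have "\<dots> = pois B k n" unfolding pois_def B'_def
      using B by (intro prod.cong refl) (simp add: measure_lborel_translate)
    finally show "emeasure (distr P OmegaM (theta z)) {\<omega> \<in> Omega. \<forall>i<n. cnt \<omega> (B i) = of_nat (k i)} =
          (\<Prod>i<n. ennreal (exp (- measure lborel (B i)) * measure lborel (B i) ^ k i / fact (k i)))"
      by (simp add: pois_def)
  qed
qed

lemma flow_stationary_P: "poisson_law P \<Longrightarrow> flow_stationary P"
  unfolding flow_stationary_def
  using theta_measurable poisson_unique[OF poisson_theta] by blast


definition gd :: "nat \<Rightarrow> real \<Rightarrow> int" where "gd n x = \<lfloor>2 ^ n * x\<rfloor>"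
definition Tn :: "nat \<Rightarrow> real set \<Rightarrow> real set" where "Tn n S = S \<inter> {- real n..<real n}"
definition Kn :: "nat \<Rightarrow> int set" where "Kn n = {- (int n * 2 ^ n)..<int n * 2 ^ n}"
definition In :: "nat \<Rightarrow> int \<Rightarrow> real set" where
  "In n k = {- real n..<real n} \<inter> {real_of_int k / 2 ^ n..<(real_of_int k + 1) / 2 ^ n}"

lemma In_iff: "x \<in> In n k \<longleftrightarrow> x \<in> {- real n..<real n} \<and> gd n x = k"
proof -
  have p: "(0::real) < 2 ^ n" by simp
  have "gd n x = k \<longleftrightarrow> real_of_int k \<le> 2 ^ n * x \<and> 2 ^ n * x < real_of_int k + 1"
    unfolding gd_def floor_eq_iff ..
  also have "\<dots> \<longleftrightarrow> real_of_int k / 2 ^ n \<le> x \<and> x < (real_of_int k + 1) / 2 ^ n"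
    using p by (simp add: divide_le_eq less_divide_eq mult.commute)
  finally show ?thesis unfolding In_def by auto
qed

lemma gd_range:
  assumes "x \<in> {- real n..<real n}" shows "gd n x \<in> Kn n"
proof -
  have p: "(0::real) < 2 ^ n" by simp
  from assms have "- real n \<le> x" "x < real n" by auto
  have a: "- (real n * 2 ^ n) \<le> 2 ^ n * x"
    using mult_right_mono[OF \<open>- real n \<le> x\<close>, of "2^n"] by (simp add: mult.commute)
  have b: "2 ^ n * x < real n * 2 ^ n"
    using mult_strict_right_mono[OF \<open>x < real n\<close> p] by (simp add: mult.commute)
  have "- (int n * 2 ^ n) \<le> \<lfloor>2 ^ n * x\<rfloor>" using a by (simp add: le_floor_iff)
  moreover have "\<lfloor>2 ^ n * x\<rfloor> < int n * 2 ^ n" using b by (simp add: floor_less_iff)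
  ultimately show ?thesis by (simp add: Kn_def gd_def)
qed

lemma In_borel[measurable]: "In n k \<in> sets borel" by (simp add: In_def)

lemma In_bounded: "bounded (In n k)" by (simp add: In_def bounded_Int)

lemma In_disj: "k \<noteq> k' \<Longrightarrow> In n k \<inter> In n k' = {}"
  using In_iff by auto

lemma In_cover: "{- real n..<real n} = (\<Union>k\<in>Kn n. In n k)"
  using In_iff gd_range by auto

lemma In_measure: "measure lborel (In n k) \<le> 1 / 2 ^ n"
proof -
  have "measure lborel (In n k) \<le> measure lborel {real_of_int k / 2 ^ n..<(real_of_int k + 1) / 2 ^ n}"
  proof (intro measure_mono_fmeasurable)
    have le: "real_of_int k / 2^n \<le> (real_of_int k + 1) / 2^n" by (intro divide_right_mono) auto
    show "{real_of_int k / 2 ^ n..<(real_of_int k + 1) / 2 ^ n} \<in> fmeasurable lborel"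
      unfolding fmeasurable_def using le by (simp add: emeasure_lborel_Ico)
  qed (auto simp: In_def)
  also have "\<dots> = 1 / 2 ^ n"
  proof -
    have le: "real_of_int k / 2^n \<le> (real_of_int k + 1) / 2^n" by (intro divide_right_mono) auto
    then show ?thesis by (simp add: measure_lborel_Ico diff_divide_distrib[symmetric])
  qed
  finally show ?thesis .
qed

lemma gd_Suc: "gd n x = gd (Suc n) x div 2"
proof -
  have "gd n x = \<lfloor>(2 ^ Suc n * x) / real_of_int 2\<rfloor>" by (simp add: gd_def)
  also have "\<dots> = gd (Suc n) x div 2" unfolding gd_def by (rule floor_divide_real_eq_div) simp
  finally show ?thesis .
qed

lemma finite_img: "finite (gd n ` Tn n S)"
proof (rule finite_subset)
  show "gd n ` Tn n S \<subseteq> Kn n" using gd_range by (auto simp: Tn_def)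
qed (simp add: Kn_def)

lemma card_img_mono: "card (gd n ` Tn n S) \<le> card (gd (Suc n) ` Tn (Suc n) S)"
proof -
  have "gd n ` Tn n S \<subseteq> (\<lambda>k. k div 2) ` (gd (Suc n) ` Tn (Suc n) S)"
  proof
    fix k assume "k \<in> gd n ` Tn n S"
    then obtain x where x: "x \<in> Tn n S" "k = gd n x" by blast
    then have "x \<in> Tn (Suc n) S" by (auto simp: Tn_def)
    with x show "k \<in> (\<lambda>k. k div 2) ` (gd (Suc n) ` Tn (Suc n) S)"
      by (auto simp: gd_Suc[of n x])
  qed
  then have "card (gd n ` Tn n S) \<le> card ((\<lambda>k. k div 2) ` (gd (Suc n) ` Tn (Suc n) S))"
    by (intro card_mono finite_imageI finite_img)
  also have "\<dots> \<le> card (gd (Suc n) ` Tn (Suc n) S)" by (rule card_image_le[OF finite_img])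
  finally show ?thesis .
qed

lemma card_img_incseq: "incseq (\<lambda>n. card (gd n ` Tn n S))"
  using card_img_mono by (intro incseq_SucI) auto

lemma gd_sep:
  assumes "x \<noteq> y" shows "eventually (\<lambda>n. gd n x \<noteq> gd n y) sequentially"
proof -
  have d: "0 < \<bar>x - y\<bar>" using assms by simp
  obtain N where N: "1 / \<bar>x - y\<bar> < 2 ^ N" using real_arch_pow[of 2 "1 / \<bar>x - y\<bar>"] by auto
  show ?thesis unfolding eventually_sequentially
  proof (intro exI allI impI)
    fix n assume "N \<le> n"
    then have "(2::real) ^ N \<le> 2 ^ n" by (intro power_increasing) auto
    with N have "1 / \<bar>x - y\<bar> < 2 ^ n" by linarith
    then have 1: "1 < 2 ^ n * \<bar>x - y\<bar>" using d by (simp add: divide_less_eq)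
    show "gd n x \<noteq> gd n y"
    proof
      assume eq: "gd n x = gd n y"
      have "real_of_int (gd n x) \<le> 2 ^ n * x" "2 ^ n * x < real_of_int (gd n x) + 1"
        unfolding gd_def by linarith+
      moreover have "real_of_int (gd n y) \<le> 2 ^ n * y" "2 ^ n * y < real_of_int (gd n y) + 1"
        unfolding gd_def by linarith+
      ultimately have "\<bar>2 ^ n * x - 2 ^ n * y\<bar> < 1" using eq by linarith
      then have "2 ^ n * \<bar>x - y\<bar> < 1" by (simp add: right_diff_distrib[symmetric] abs_mult)
      with 1 show False by simp
    qed
  qed
qed

lemma finite_eventually:
  assumes "finite F"
  shows "eventually (\<lambda>n. inj_on (gd n) F \<and> F \<subseteq> {- real n..<real n}) sequentially"
proof -
  have "eventually (\<lambda>n. \<forall>x\<in>F. \<forall>y\<in>F. x \<noteq> y \<longrightarrow> gd n x \<noteq> gd n y) sequentially"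
  proof (rule eventually_ball_finite[OF assms], intro ballI)
    fix x assume "x \<in> F"
    show "eventually (\<lambda>n. \<forall>y\<in>F. x \<noteq> y \<longrightarrow> gd n x \<noteq> gd n y) sequentially"
    proof (rule eventually_ball_finite[OF assms], intro ballI)
      fix y show "eventually (\<lambda>n. x \<noteq> y \<longrightarrow> gd n x \<noteq> gd n y) sequentially"
        by (cases "x = y") (auto intro: gd_sep)
    qed
  qed
  moreover have "eventually (\<lambda>n. \<forall>x\<in>F. x \<in> {- real n..<real n}) sequentially"
  proof (rule eventually_ball_finite[OF assms], intro ballI)
    fix x :: real
    obtain N :: nat where N: "\<bar>x\<bar> < real N" using reals_Archimedean2 by blast
    show "eventually (\<lambda>n. x \<in> {- real n..<real n}) sequentially" unfolding eventually_sequentially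
    proof (intro exI allI impI)
      fix n assume "N \<le> n"
      then have "real N \<le> real n" by simp
      with N show "x \<in> {- real n..<real n}" by auto
    qed
  qed
  ultimately show ?thesis
    by eventually_elim (auto simp: inj_on_def)
qed

lemma card_le_SUP:
  assumes "finite F" "F \<subseteq> S"
  shows "of_nat (card F) \<le> (SUP n. (of_nat (card (gd n ` Tn n S)) :: ennreal))"
proof -
  obtain n where n: "inj_on (gd n) F" "F \<subseteq> {- real n..<real n}"
    using eventually_happens'[OF sequentially_bot finite_eventually[OF assms(1)]] by blast
  have "card F = card (gd n ` F)" using card_image[OF n(1)] by simp
  also have "\<dots> \<le> card (gd n ` Tn n S)"
    using n(2) assms(2) by (intro card_mono finite_img image_mono) (auto simp: Tn_def)
  finally have "(of_nat (card F) :: ennreal) \<le> of_nat (card (gd n ` Tn n S))" by simp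
  also have "\<dots> \<le> (SUP n. of_nat (card (gd n ` Tn n S)))" by (rule SUP_upper) simp
  finally show ?thesis .
qed

lemma dyadic_sup:
  "emeasure (count_space UNIV) S = (SUP n. (of_nat (card (gd n ` Tn n S)) :: ennreal))"
proof (rule antisym)
  show "(SUP n. (of_nat (card (gd n ` Tn n S)) :: ennreal)) \<le> emeasure (count_space UNIV) S"
  proof (rule SUP_least)
    fix n
    show "of_nat (card (gd n ` Tn n S)) \<le> emeasure (count_space UNIV) S"
    proof (cases "finite S")
      case True
      have "card (gd n ` Tn n S) \<le> card (Tn n S)" using True by (intro card_image_le) (simp add: Tn_def)
      also have "\<dots> \<le> card S" using True by (intro card_mono) (auto simp: Tn_def)
      finally show ?thesis using True by simp
    qed simp
  qed
next
  show "emeasure (count_space UNIV) S \<le> (SUP n. (of_nat (card (gd n ` Tn n S)) :: ennreal))"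
  proof (cases "finite S")
    case True
    then show ?thesis using card_le_SUP[OF True order_refl] by simp
  next
    case False
    have "(SUP m. (of_nat m :: ennreal)) \<le> (SUP n. (of_nat (card (gd n ` Tn n S)) :: ennreal))"
    proof (rule SUP_least)
      fix m
      obtain F where F: "finite F" "card F = m" "F \<subseteq> S" using infinite_arbitrarily_large[OF False] by blast
      show "of_nat m \<le> (SUP n. (of_nat (card (gd n ` Tn n S)) :: ennreal))"
        using card_le_SUP[OF F(1,3)] F(2) by simp
    qed
    then show ?thesis using False by (simp add: ennreal_SUP_of_nat_eq_top)
  qed
qed

lemma img_eq: "gd n ` Tn n S = {k \<in> Kn n. S \<inter> In n k \<noteq> {}}"
proof (intro set_eqI iffI)
  fix k assume "k \<in> gd n ` Tn n S"
  then obtain x where x: "x \<in> S" "x \<in> {- real n..<real n}" "k = gd n x" by (auto simp: Tn_def)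
  then have "x \<in> In n k" using In_iff by simp
  then show "k \<in> {k \<in> Kn n. S \<inter> In n k \<noteq> {}}" using x gd_range by auto
next
  fix k assume "k \<in> {k \<in> Kn n. S \<inter> In n k \<noteq> {}}"
  then obtain x where "x \<in> S" "x \<in> In n k" by auto
  then show "k \<in> gd n ` Tn n S" using In_iff[of x n k] by (auto simp: Tn_def)
qed

lemma card_img_sum:
  "(of_nat (card (gd n ` Tn n S)) :: ennreal) = (\<Sum>k\<in>Kn n. if S \<inter> In n k = {} then 0 else 1)"
proof -
  have "(of_nat (card (gd n ` Tn n S)) :: ennreal) = (\<Sum>k\<in>{k \<in> Kn n. S \<inter> In n k \<noteq> {}}. 1)"
    unfolding img_eq by simp
  also have "\<dots> = (\<Sum>k\<in>Kn n. if S \<inter> In n k \<noteq> {} then 1 else 0)"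
    by (rule sum.inter_filter) (simp add: Kn_def)
  also have "\<dots> = (\<Sum>k\<in>Kn n. if S \<inter> In n k = {} then 0 else 1)"
    by (rule sum.cong[OF refl]) simp
  finally show ?thesis .
qed


definition Z :: "nat \<Rightarrow> real set \<Rightarrow> (real \<Rightarrow> nat) \<Rightarrow> ennreal" where
  "Z n B \<omega> = (\<Sum>k\<in>Kn n. if cnt \<omega> (B \<inter> In n k) = 0 then 0 else 1)"

lemma Z_card: "Z n B \<omega> = of_nat (card (gd n ` Tn n ({y. 0 < \<omega> y} \<inter> B)))"
proof -
  have "({y. 0 < \<omega> y} \<inter> B) \<inter> In n k = {} \<longleftrightarrow> cnt \<omega> (B \<inter> In n k) = 0" for k
    by (auto simp: cnt_zero_iff)
  then show ?thesis unfolding card_img_sum Z_def by simp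
qed

lemma dcount_eq: "emeasure (count_space UNIV) ({y. 0 < \<omega> y} \<inter> B) = (SUP n. Z n B \<omega>)"
  unfolding Z_card by (rule dyadic_sup)

lemma Z_incseq: "incseq (\<lambda>n. Z n B \<omega>)"
  unfolding Z_card using card_img_incseq unfolding incseq_def by simp

lemma Z_measurable[measurable]:
  assumes [measurable]: "B \<in> sets borel"
  shows "Z n B \<in> borel_measurable OmegaM"
  unfolding Z_def by measurable

lemma E_ind:
  assumes P: "poisson_law P" and C: "C \<in> sets borel" "bounded C"
  shows "(\<integral>\<^sup>+\<omega>. (if cnt \<omega> C = 0 then 0 else 1) \<partial>P) = ennreal (1 - exp (- measure lborel C))"
proof -
  have sP: "sets P = sets OmegaM" by (rule poisson_law_sets[OF P])
  have spP: "space P = Omega" by (rule poisson_law_space[OF P])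
  interpret prob_space P by (rule poisson_law_prob[OF P])
  let ?E = "Ev (\<lambda>_. C) (\<lambda>_. 0) 1"
  have Es: "?E \<in> sets P" unfolding sP using C by (intro Ev_sets) auto
  have "(\<integral>\<^sup>+\<omega>. (if cnt \<omega> C = 0 then 0 else 1) \<partial>P) = (\<integral>\<^sup>+\<omega>. indicator (space P - ?E) \<omega> \<partial>P)"
    by (intro nn_integral_cong) (auto simp: Ev_def spP)
  also have "\<dots> = emeasure P (space P - ?E)" using Es by (intro nn_integral_indicator) auto
  also have "\<dots> = emeasure P (space P) - emeasure P ?E" using Es by (intro emeasure_compl) auto
  also have "emeasure P ?E = pois (\<lambda>_. C) (\<lambda>_. 0) 1"
    using C by (intro poisson_Ev[OF P]) (auto simp: disjoint_family_on_def)
  also have "\<dots> = ennreal (exp (- measure lborel C))" by (simp add: pois_def)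
  also have "emeasure P (space P) - ennreal (exp (- measure lborel C)) = ennreal (1 - exp (- measure lborel C))"
    unfolding emeasure_space_1 by (subst ennreal_1[symmetric], rule ennreal_minus) simp
  finally show ?thesis .
qed

lemma E_Z:
  assumes P: "poisson_law P" and B: "B \<in> sets borel"
  shows "(\<integral>\<^sup>+\<omega>. Z n B \<omega> \<partial>P) = (\<Sum>k\<in>Kn n. ennreal (1 - exp (- measure lborel (B \<inter> In n k))))"
proof -
  have sP: "sets P = sets OmegaM" by (rule poisson_law_sets[OF P])
  have m: "(\<lambda>\<omega>. if cnt \<omega> (B \<inter> In n k) = 0 then 0 else 1 :: ennreal) \<in> borel_measurable P" for k
    unfolding measurable_cong_sets[OF sP refl] using B by measurable
  show ?thesis unfolding Z_def
    by (subst nn_integral_sum[OF m]) (intro sum.cong refl E_ind[OF P] B, auto intro: bounded_Int In_bounded sets.Int[OF B In_borel])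
qed

lemma exp_upper: "1 - exp (- a) \<le> (a::real)"
  using exp_ge_add_one_self[of "-a"] by simp

lemma exp_lower:
  fixes a h :: real assumes "0 \<le> a" "a \<le> h"
  shows "(1 / (1 + h)) * a \<le> 1 - exp (- a)"
proof -
  have "1 + a \<le> exp a" by (rule exp_ge_add_one_self)
  then have "exp (- a) \<le> 1 / (1 + a)" using assms by (simp add: exp_minus inverse_eq_divide frac_le)
  then have "a / (1 + a) \<le> 1 - exp (- a)" using assms by (simp add: field_simps)
  moreover have "(1 / (1 + h)) * a \<le> a / (1 + a)"
    using assms by (simp add: field_simps mult_left_mono)
  ultimately show ?thesis by linarith
qed

lemma In_emeasure_finite: "emeasure lborel (B \<inter> In n k) \<noteq> \<infinity>"
proof -
  have le: "real_of_int k / 2^n \<le> (real_of_int k + 1) / 2^n" by (intro divide_right_mono) auto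
  have "emeasure lborel (B \<inter> In n k) \<le> emeasure lborel {real_of_int k / 2 ^ n..<(real_of_int k + 1) / 2 ^ n}"
    by (intro emeasure_mono) (auto simp: In_def)
  also have "\<dots> < \<infinity>" using le by (simp add: emeasure_lborel_Ico)
  finally show ?thesis by simp
qed

lemma In_sum:
  assumes B: "B \<in> sets borel"
  shows "(\<Sum>k\<in>Kn n. emeasure lborel (B \<inter> In n k)) = emeasure lborel (B \<inter> {- real n..<real n})"
proof -
  have "(\<Sum>k\<in>Kn n. emeasure lborel (B \<inter> In n k)) = emeasure lborel (\<Union>k\<in>Kn n. B \<inter> In n k)"
  proof (rule sum_emeasure)
    show "(\<lambda>k. B \<inter> In n k) ` Kn n \<subseteq> sets lborel" using B by auto
    show "disjoint_family_on (\<lambda>k. B \<inter> In n k) (Kn n)"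
      unfolding disjoint_family_on_def using In_disj by blast
  qed (simp add: Kn_def)
  also have "(\<Union>k\<in>Kn n. B \<inter> In n k) = B \<inter> {- real n..<real n}" using In_cover[of n] by blast
  finally show ?thesis .
qed

lemma meas_In: "measure lborel (B \<inter> In n k) \<le> 1 / 2 ^ n" if B: "B \<in> sets borel"
proof -
  have "measure lborel (B \<inter> In n k) \<le> measure lborel (In n k)"
  proof (intro measure_mono_fmeasurable)
    show "In n k \<in> fmeasurable lborel"
      unfolding fmeasurable_def using In_emeasure_finite[of UNIV n k] by (simp add: top.not_eq_extremum)
  qed (use B in auto)
  then show ?thesis using In_measure[of n k] by linarith
qed

lemma Z_upper:
  assumes P: "poisson_law P" and B: "B \<in> sets borel"
  shows "(\<integral>\<^sup>+\<omega>. Z n B \<omega> \<partial>P) \<le> emeasure lborel (B \<inter> {- real n..<real n})"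
proof -
  have "(\<integral>\<^sup>+\<omega>. Z n B \<omega> \<partial>P) = (\<Sum>k\<in>Kn n. ennreal (1 - exp (- measure lborel (B \<inter> In n k))))"
    by (rule E_Z[OF P B])
  also have "\<dots> \<le> (\<Sum>k\<in>Kn n. emeasure lborel (B \<inter> In n k))"
  proof (intro sum_mono)
    fix k
    have "ennreal (1 - exp (- measure lborel (B \<inter> In n k))) \<le> ennreal (measure lborel (B \<inter> In n k))"
      by (intro ennreal_leI exp_upper)
    also have "\<dots> = emeasure lborel (B \<inter> In n k)"
      using In_emeasure_finite by (intro emeasure_eq_ennreal_measure[symmetric]) simp
    finally show "ennreal (1 - exp (- measure lborel (B \<inter> In n k))) \<le> emeasure lborel (B \<inter> In n k)" .
  qed
  also have "\<dots> = emeasure lborel (B \<inter> {- real n..<real n})" by (rule In_sum[OF B])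
  finally show ?thesis .
qed

lemma Z_lower:
  assumes P: "poisson_law P" and B: "B \<in> sets borel"
  shows "ennreal (1 / (1 + 1 / 2 ^ n)) * emeasure lborel (B \<inter> {- real n..<real n}) \<le> (\<integral>\<^sup>+\<omega>. Z n B \<omega> \<partial>P)"
proof -
  let ?c = "1 / (1 + 1 / 2 ^ n) :: real"
  have "ennreal ?c * emeasure lborel (B \<inter> {- real n..<real n}) = (\<Sum>k\<in>Kn n. ennreal ?c * emeasure lborel (B \<inter> In n k))"
    by (simp add: In_sum[OF B, symmetric] sum_distrib_left)
  also have "\<dots> \<le> (\<Sum>k\<in>Kn n. ennreal (1 - exp (- measure lborel (B \<inter> In n k))))"
  proof (intro sum_mono)
    fix k
    let ?a = "measure lborel (B \<inter> In n k)"
    have "ennreal ?c * emeasure lborel (B \<inter> In n k) = ennreal ?c * ennreal ?a"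
      using In_emeasure_finite by (simp add: emeasure_eq_ennreal_measure)
    also have "\<dots> = ennreal (?c * ?a)" by (rule ennreal_mult[symmetric]) auto
    also have "\<dots> \<le> ennreal (1 - exp (- ?a))"
      by (intro ennreal_leI exp_lower meas_In B) simp
    finally show "ennreal ?c * emeasure lborel (B \<inter> In n k) \<le> ennreal (1 - exp (- ?a))" .
  qed
  also have "\<dots> = (\<integral>\<^sup>+\<omega>. Z n B \<omega> \<partial>P)" by (rule E_Z[OF P B, symmetric])
  finally show ?thesis .
qed


lemma dcount_measurable[measurable]:
  assumes [measurable]: "B \<in> sets borel"
  shows "(\<lambda>\<omega>. emeasure (count_space UNIV) ({y. 0 < \<omega> y} \<inter> B)) \<in> borel_measurable OmegaM"
  unfolding dcount_eq by measurable

lemma lborel_SUP: "B \<in> sets borel \<Longrightarrow> emeasure lborel B = (SUP m. emeasure lborel (B \<inter> {- real m..<real m}))"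
proof -
  assume B: "B \<in> sets borel"
  have "(SUP m. emeasure lborel (B \<inter> {- real m..<real m})) = emeasure lborel (\<Union>m. B \<inter> {- real m..<real m})"
    using B by (intro SUP_emeasure_incseq) (auto simp: incseq_def)
  also have "(\<Union>m. B \<inter> {- real m..<real m}) = B"
  proof (intro set_eqI iffI)
    fix x assume "x \<in> B"
    obtain m :: nat where "\<bar>x\<bar> < real m" using reals_Archimedean2 by blast
    with \<open>x \<in> B\<close> have "x \<in> B \<inter> {- real m..<real m}" by auto
    then show "x \<in> (\<Union>m. B \<inter> {- real m..<real m})" by blast
  qed auto
  finally show ?thesis by simp
qed

lemma c_lim: "(\<lambda>n. ennreal (1 / (1 + 1 / 2 ^ n))) \<longlonglongrightarrow> 1"
proof -
  have "(\<lambda>n. (1/2::real) ^ n) \<longlonglongrightarrow> 0" by (rule LIMSEQ_realpow_zero) auto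
  then have "(\<lambda>n. 1 / (1 + (1/2::real) ^ n)) \<longlonglongrightarrow> 1 / (1 + 0)"
    by (intro tendsto_intros) auto
  then have "(\<lambda>n. 1 / (1 + 1 / (2::real) ^ n)) \<longlonglongrightarrow> 1" by (simp add: power_one_over)
  then show ?thesis by (rule tendsto_ennrealI[where x=1, simplified])
qed

lemma E_dcount:
  assumes P: "poisson_law P" and B: "B \<in> sets borel"
  shows "(\<integral>\<^sup>+\<omega>. emeasure (count_space UNIV) ({y. 0 < \<omega> y} \<inter> B) \<partial>P) = emeasure lborel B"
proof -
  have sP: "sets P = sets OmegaM" by (rule poisson_law_sets[OF P])
  have mZ: "Z n B \<in> borel_measurable P" for n
    unfolding measurable_cong_sets[OF sP refl] using B by measurable
  have inc: "incseq (\<lambda>n. Z n B)" using Z_incseq unfolding incseq_def le_fun_def by blast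
  have "(\<integral>\<^sup>+\<omega>. emeasure (count_space UNIV) ({y. 0 < \<omega> y} \<inter> B) \<partial>P) = (\<integral>\<^sup>+\<omega>. (SUP n. Z n B \<omega>) \<partial>P)"
    by (simp add: dcount_eq)
  also have "\<dots> = (SUP n. \<integral>\<^sup>+\<omega>. Z n B \<omega> \<partial>P)"
    by (rule nn_integral_monotone_convergence_SUP[OF inc mZ])
  also have "\<dots> = emeasure lborel B"
  proof (rule antisym)
    show "(SUP n. \<integral>\<^sup>+\<omega>. Z n B \<omega> \<partial>P) \<le> emeasure lborel B"
    proof (rule SUP_least)
      fix n
      have "(\<integral>\<^sup>+\<omega>. Z n B \<omega> \<partial>P) \<le> emeasure lborel (B \<inter> {- real n..<real n})" by (rule Z_upper[OF P B])
      also have "\<dots> \<le> emeasure lborel B" using B by (intro emeasure_mono) auto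
      finally show "(\<integral>\<^sup>+\<omega>. Z n B \<omega> \<partial>P) \<le> emeasure lborel B" .
    qed
  next
    show "emeasure lborel B \<le> (SUP n. \<integral>\<^sup>+\<omega>. Z n B \<omega> \<partial>P)"
      unfolding lborel_SUP[OF B]
    proof (rule SUP_least)
      fix m :: nat
      let ?e = "emeasure lborel (B \<inter> {- real m..<real m})"
      have lim: "(\<lambda>n. ennreal (1 / (1 + 1 / 2 ^ n)) * ?e) \<longlonglongrightarrow> 1 * ?e"
        by (intro tendsto_mult_ennreal c_lim tendsto_const) simp
      show "?e \<le> (SUP n. \<integral>\<^sup>+\<omega>. Z n B \<omega> \<partial>P)"
      proof (rule LIMSEQ_le_const2[OF lim[simplified]], intro exI allI impI)
        fix n assume "m \<le> n"
        have "ennreal (1 / (1 + 1 / 2 ^ n)) * ?e \<le> ennreal (1 / (1 + 1 / 2 ^ n)) * emeasure lborel (B \<inter> {- real n..<real n})"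
          using B \<open>m \<le> n\<close> by (intro mult_left_mono emeasure_mono) auto
        also have "\<dots> \<le> (\<integral>\<^sup>+\<omega>. Z n B \<omega> \<partial>P)" by (rule Z_lower[OF P B])
        also have "\<dots> \<le> (SUP n. \<integral>\<^sup>+\<omega>. Z n B \<omega> \<partial>P)" by (rule SUP_upper) simp
        finally show "ennreal (1 / (1 + 1 / 2 ^ n)) * ?e \<le> (SUP n. \<integral>\<^sup>+\<omega>. Z n B \<omega> \<partial>P)" .
      qed
    qed
  qed
  finally show ?thesis .
qed

lemma nn_integral_count_space_indicator_set:
  "(\<integral>\<^sup>+y. indicator A y \<partial>count_space S) = emeasure (count_space UNIV) (S \<inter> A)"
proof -
  have "(\<integral>\<^sup>+y. indicator A y \<partial>count_space S) = (\<integral>\<^sup>+y. indicator (S \<inter> A) y \<partial>count_space UNIV)"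
  proof -
    have "(\<lambda>y. indicator A y * indicator S y) = (indicator (S \<inter> A) :: _ \<Rightarrow> ennreal)"
      by (auto simp: indicator_def fun_eq_iff)
    then show ?thesis by (subst nn_integral_count_space_indicator) simp_all
  qed
  also have "\<dots> = emeasure (count_space UNIV) (S \<inter> A)" by (intro nn_integral_indicator) simp
  finally show ?thesis .
qed

lemma campbell:
  assumes P: "poisson_law P" and f: "f \<in> borel_measurable (borel :: real measure)"
  shows "(\<lambda>\<omega>. \<integral>\<^sup>+y. f y \<partial>count_space {y. 0 < \<omega> y}) \<in> borel_measurable OmegaM \<and>
    (\<integral>\<^sup>+\<omega>. (\<integral>\<^sup>+y. f y \<partial>count_space {y. 0 < \<omega> y}) \<partial>P) = (\<integral>\<^sup>+y. f y \<partial>lborel)"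
  using f
proof (induct rule: borel_measurable_induct)
  case (cong f g)
  have "f = g" using cong(3) by (intro ext) simp
  then show ?case using cong(4) by simp
next
  case (set A)
  have eq: "(\<integral>\<^sup>+y. indicator A y \<partial>count_space {y. 0 < \<omega> y}) = emeasure (count_space UNIV) ({y. 0 < \<omega> y} \<inter> A)" for \<omega>
    by (rule nn_integral_count_space_indicator_set)
  show ?case unfolding eq
  proof
    show "(\<lambda>\<omega>. emeasure (count_space UNIV) ({y. 0 < \<omega> y} \<inter> A)) \<in> borel_measurable OmegaM"
      using set by measurable
    show "(\<integral>\<^sup>+\<omega>. emeasure (count_space UNIV) ({y. 0 < \<omega> y} \<inter> A) \<partial>P) = (\<integral>\<^sup>+y. indicator A y \<partial>lborel)"
      using set by (simp add: E_dcount[OF P])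
  qed
next
  case (mult u c)
  have sP: "sets P = sets OmegaM" by (rule poisson_law_sets[OF P])
  have eq: "(\<integral>\<^sup>+y. c * u y \<partial>count_space {y. 0 < \<omega> y}) = c * (\<integral>\<^sup>+y. u y \<partial>count_space {y. 0 < \<omega> y})" for \<omega>
    by (rule nn_integral_cmult) simp
  have m: "(\<lambda>\<omega>. \<integral>\<^sup>+y. u y \<partial>count_space {y. 0 < \<omega> y}) \<in> borel_measurable OmegaM" using mult(4) by blast
  have mP: "(\<lambda>\<omega>. \<integral>\<^sup>+y. u y \<partial>count_space {y. 0 < \<omega> y}) \<in> borel_measurable P"
    using m measurable_cong_sets[OF sP refl] by blast
  have ul: "u \<in> borel_measurable lborel" using mult(2) measurable_cong_sets[OF sets_lborel refl] by blast
  show ?case unfolding eq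
  proof
    show "(\<lambda>\<omega>. c * (\<integral>\<^sup>+y. u y \<partial>count_space {y. 0 < \<omega> y})) \<in> borel_measurable OmegaM" using m by measurable
    show "(\<integral>\<^sup>+\<omega>. c * (\<integral>\<^sup>+y. u y \<partial>count_space {y. 0 < \<omega> y}) \<partial>P) = (\<integral>\<^sup>+y. c * u y \<partial>lborel)"
      using mult(4) by (simp add: nn_integral_cmult[OF mP] nn_integral_cmult[OF ul])
  qed
next
  case (add u v)
  have sP: "sets P = sets OmegaM" by (rule poisson_law_sets[OF P])
  have eq: "(\<integral>\<^sup>+y. v y + u y \<partial>count_space {y. 0 < \<omega> y}) = (\<integral>\<^sup>+y. v y \<partial>count_space {y. 0 < \<omega> y}) + (\<integral>\<^sup>+y. u y \<partial>count_space {y. 0 < \<omega> y})" for \<omega>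
    by (rule nn_integral_add) simp_all
  have mu: "(\<lambda>\<omega>. \<integral>\<^sup>+y. u y \<partial>count_space {y. 0 < \<omega> y}) \<in> borel_measurable OmegaM" using add(3) by blast
  have mv: "(\<lambda>\<omega>. \<integral>\<^sup>+y. v y \<partial>count_space {y. 0 < \<omega> y}) \<in> borel_measurable OmegaM" using add(7) by blast
  have muP: "(\<lambda>\<omega>. \<integral>\<^sup>+y. u y \<partial>count_space {y. 0 < \<omega> y}) \<in> borel_measurable P"
    using mu measurable_cong_sets[OF sP refl] by blast
  have mvP: "(\<lambda>\<omega>. \<integral>\<^sup>+y. v y \<partial>count_space {y. 0 < \<omega> y}) \<in> borel_measurable P"
    using mv measurable_cong_sets[OF sP refl] by blast
  have ul: "u \<in> borel_measurable lborel" using add(1) measurable_cong_sets[OF sets_lborel refl] by blast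
  have vl: "v \<in> borel_measurable lborel" using add(4) measurable_cong_sets[OF sets_lborel refl] by blast
  show ?case unfolding eq
  proof
    show "(\<lambda>\<omega>. (\<integral>\<^sup>+y. v y \<partial>count_space {y. 0 < \<omega> y}) + (\<integral>\<^sup>+y. u y \<partial>count_space {y. 0 < \<omega> y})) \<in> borel_measurable OmegaM"
      using mu mv by measurable
    show "(\<integral>\<^sup>+\<omega>. (\<integral>\<^sup>+y. v y \<partial>count_space {y. 0 < \<omega> y}) + (\<integral>\<^sup>+y. u y \<partial>count_space {y. 0 < \<omega> y}) \<partial>P) = (\<integral>\<^sup>+y. v y + u y \<partial>lborel)"
      using add(3) add(7) by (simp add: nn_integral_add[OF mvP muP] nn_integral_add[OF vl ul])
  qed
next
  case (seq U)
  have sP: "sets P = sets OmegaM" by (rule poisson_law_sets[OF P])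
  define X where "X i (\<omega> :: real \<Rightarrow> nat) = (\<integral>\<^sup>+y. U i y \<partial>count_space {y. 0 < \<omega> y})" for i \<omega>
  have mX: "X i \<in> borel_measurable OmegaM" for i using seq(3) unfolding X_def by blast
  have mXP: "X i \<in> borel_measurable P" for i using mX measurable_cong_sets[OF sP refl] by blast
  have EX: "(\<integral>\<^sup>+\<omega>. X i \<omega> \<partial>P) = (\<integral>\<^sup>+y. U i y \<partial>lborel)" for i using seq(3) unfolding X_def by blast
  have incX: "incseq X"
    unfolding incseq_def le_fun_def X_def
    using seq(4) by (auto intro!: nn_integral_mono simp: incseq_def le_fun_def)
  have eq: "(\<integral>\<^sup>+y. (SUP i. U i) y \<partial>count_space {y. 0 < \<omega> y}) = (SUP i. X i \<omega>)" for \<omega>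
    unfolding X_def SUP_apply by (rule nn_integral_monotone_convergence_SUP[OF seq(4)]) simp
  have Ul: "U i \<in> borel_measurable lborel" for i using seq(1) measurable_cong_sets[OF sets_lborel refl] by blast
  show ?case unfolding eq
  proof
    show "(\<lambda>\<omega>. SUP i. X i \<omega>) \<in> borel_measurable OmegaM" using mX by measurable
    have "(\<integral>\<^sup>+\<omega>. (SUP i. X i \<omega>) \<partial>P) = (SUP i. \<integral>\<^sup>+\<omega>. X i \<omega> \<partial>P)"
      by (rule nn_integral_monotone_convergence_SUP[OF incX mXP])
    also have "\<dots> = (SUP i. \<integral>\<^sup>+y. U i y \<partial>lborel)" by (simp add: EX)
    also have "\<dots> = (\<integral>\<^sup>+y. (SUP i. U i y) \<partial>lborel)"
      by (rule nn_integral_monotone_convergence_SUP[OF seq(4) Ul, symmetric])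
    finally show "(\<integral>\<^sup>+\<omega>. (SUP i. X i \<omega>) \<partial>P) = (\<integral>\<^sup>+y. (SUP i. U i) y \<partial>lborel)"
      by (simp add: SUP_apply image_image)
  qed
qed


lemma sets_lborel_pair: "sets (lborel \<Otimes>\<^sub>M lborel) = sets (borel :: (real \<times> real) measure)"
  unfolding lborel_prod by simp

lemma slice_meas:
  assumes C: "C \<in> sets (borel :: (real \<times> real) measure)"
  shows "(\<lambda>y. emeasure lborel {x::real. (x, y) \<in> C}) \<in> borel_measurable (borel :: real measure)"
proof -
  have "(\<lambda>y. emeasure lborel ((\<lambda>x. (x, y)) -` C)) \<in> borel_measurable (lborel :: real measure)"
    using C sets_lborel_pair by (intro lborel_pair.measurable_emeasure_Pair2) simp
  then show ?thesis using measurable_cong_sets[OF sets_lborel refl] by (simp add: vimage_def)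
qed

lemma xi_fun_eq: "xi_fun \<omega> C = (\<integral>\<^sup>+y. emeasure lborel {x. (x, y) \<in> C} \<partial>count_space {y. 0 < \<omega> y})"
  by (simp add: xi_fun_def)

lemma random_measure_xi:
  assumes P: "poisson_law P"
  shows "random_measure xi"
  unfolding random_measure_def
proof (intro conjI ballI)
  fix C :: "(real \<times> real) set" assume C: "C \<in> sets borel"
  have "(\<lambda>\<omega>. xi_fun \<omega> C) \<in> borel_measurable OmegaM"
    unfolding xi_fun_eq using campbell[OF P slice_meas[OF C]] by blast
  then show "(\<lambda>\<omega>. emeasure (xi \<omega>) C) \<in> borel_measurable OmegaM"
    using C by (simp add: emeasure_xi)
qed simp

lemma random_measure_eta: "random_measure eta"
  unfolding random_measure_def eta_def by simp

lemma has_intensity_xi: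
  assumes P: "poisson_law P"
  shows "has_intensity P xi 1"
  unfolding has_intensity_def
proof (intro ballI)
  fix C :: "(real \<times> real) set" assume C: "C \<in> sets borel"
  have "(\<integral>\<^sup>+\<omega>. emeasure (xi \<omega>) C \<partial>P) = (\<integral>\<^sup>+\<omega>. xi_fun \<omega> C \<partial>P)"
    using C by (simp add: emeasure_xi)
  also have "\<dots> = (\<integral>\<^sup>+y. emeasure lborel {x. (x, y) \<in> C} \<partial>lborel)"
    unfolding xi_fun_eq using campbell[OF P slice_meas[OF C]] by blast
  also have "\<dots> = emeasure (lborel \<Otimes>\<^sub>M lborel) C"
    using C sets_lborel_pair by (subst lborel_pair.emeasure_pair_measure_alt2) (simp_all add: vimage_def)
  also have "\<dots> = emeasure lborel C" by (simp add: lborel_prod)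
  finally show "(\<integral>\<^sup>+\<omega>. emeasure (xi \<omega>) C \<partial>P) = ennreal 1 * emeasure lborel C" by simp
qed

lemma has_intensity_eta:
  assumes P: "poisson_law P"
  shows "has_intensity P eta 1"
  unfolding has_intensity_def eta_def
  using prob_space.emeasure_space_1[OF poisson_law_prob[OF P]] by simp

lemma jointly_stationary_P:
  assumes P: "poisson_law P"
  shows "jointly_stationary P xi eta"
  unfolding jointly_stationary_def
proof (intro allI impI)
  fix n :: nat and Cs Ds :: "nat \<Rightarrow> (real \<times> real) set" and z :: "real \<times> real"
  assume CD: "\<forall>i<n. Cs i \<in> sets borel \<and> Ds i \<in> sets borel"
  let ?N = "Pi\<^sub>M {..<n} (\<lambda>_. (borel :: ennreal measure) \<Otimes>\<^sub>M (borel :: ennreal measure))"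
  let ?F = "\<lambda>\<omega>. \<lambda>i\<in>{..<n}. (emeasure (xi \<omega>) (Cs i), emeasure (eta \<omega>) (Ds i))"
  let ?T = "\<lambda>\<omega>. \<lambda>i\<in>{..<n}. (emeasure (xi \<omega>) ((\<lambda>c. c + z) ` Cs i), emeasure (eta \<omega>) ((\<lambda>c. c + z) ` Ds i))"
  have sP: "sets P = sets OmegaM" by (rule poisson_law_sets[OF P])
  have spP: "space P = Omega" by (rule poisson_law_space[OF P])
  have rm: "random_measure xi" by (rule random_measure_xi[OF P])
  have mF: "?F \<in> OmegaM \<rightarrow>\<^sub>M ?N"
  proof (rule measurable_restrict)
    fix i assume "i \<in> {..<n}"
    then have "Cs i \<in> sets borel" using CD by auto
    then have "(\<lambda>\<omega>. emeasure (xi \<omega>) (Cs i)) \<in> borel_measurable OmegaM" using rm by (simp add: random_measure_def)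
    then show "(\<lambda>\<omega>. (emeasure (xi \<omega>) (Cs i), emeasure (eta \<omega>) (Ds i))) \<in> OmegaM \<rightarrow>\<^sub>M borel \<Otimes>\<^sub>M borel"
      by (simp add: eta_def)
  qed
  have mt: "theta z \<in> P \<rightarrow>\<^sub>M OmegaM"
    using theta_measurable measurable_cong_sets[OF sP refl] by blast
  have "distr P ?N ?T = distr P ?N (?F \<circ> theta z)"
  proof (rule distr_cong[OF refl refl])
    fix \<omega> assume "\<omega> \<in> space P"
    then have \<omega>: "\<omega> \<in> Omega" by (simp add: spP)
    show "?T \<omega> = (?F \<circ> theta z) \<omega>"
    proof (rule ext)
      fix i
      show "?T \<omega> i = (?F \<circ> theta z) \<omega> i"
      proof (cases "i < n")
        case True
        then have "Cs i \<in> sets borel" "Ds i \<in> sets borel" using CD by auto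
        have "emeasure (xi (theta z \<omega>)) (Cs i) = emeasure (xi \<omega>) ((\<lambda>c. c+z) ` Cs i)"
          using flow_adapted_xi \<omega> \<open>Cs i \<in> sets borel\<close> unfolding flow_adapted_def by blast
        then show ?thesis using True \<open>Ds i \<in> sets borel\<close>
          by (simp add: eta_def lborel_translate)
      qed simp
    qed
  qed
  also have "\<dots> = distr (distr P OmegaM (theta z)) ?N ?F" by (rule distr_distr[OF mF mt, symmetric])
  also have "distr P OmegaM (theta z) = P" using flow_stationary_P[OF P] unfolding flow_stationary_def by blast
  finally show "distr P ?N ?T = distr P ?N ?F" .
qed

lemma countable_supp: "\<omega> \<in> Omega \<Longrightarrow> countable {y. 0 < \<omega> y}"
proof -
  assume \<omega>: "\<omega> \<in> Omega"
  have "{y. 0 < \<omega> y} = (\<Union>m::nat. {y \<in> {- real m..real m}. 0 < \<omega> y})"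
  proof (intro set_eqI iffI)
    fix y assume "y \<in> {y. 0 < \<omega> y}"
    obtain m :: nat where "\<bar>y\<bar> \<le> real m" using real_arch_simple by blast
    with \<open>y \<in> {y. 0 < \<omega> y}\<close> have "y \<in> {y \<in> {- real m..real m}. 0 < \<omega> y}" by auto
    then show "y \<in> (\<Union>m::nat. {y \<in> {- real m..real m}. 0 < \<omega> y})" by blast
  qed auto
  moreover have "countable (\<Union>m::nat. {y \<in> {- real m..real m}. 0 < \<omega> y})"
    using \<omega> unfolding Omega_def by (intro countable_UN) (auto intro: countable_finite)
  ultimately show ?thesis by simp
qed

lemma countable_borel: "countable (Y :: real set) \<Longrightarrow> Y \<in> sets borel"
  by (rule sets.countable) auto

lemma no_balancing:
  assumes P: "poisson_law P"
  shows "\<not> (\<exists>\<tau>. allocation P \<tau> \<and> balances P \<tau> xi eta)"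
proof
  assume "\<exists>\<tau>. allocation P \<tau> \<and> balances P \<tau> xi eta"
  then obtain \<tau> where al: "allocation P \<tau>" and bal: "balances P \<tau> xi eta" by blast
  interpret prob_space P by (rule poisson_law_prob[OF P])
  define Q where "Q \<omega> \<longleftrightarrow> (\<forall>x y. \<tau> (theta y \<omega>) (x - y) = map_option (\<lambda>t. t - y) (\<tau> \<omega> x)) \<and>
      (emeasure (xi \<omega>) {s. \<tau> \<omega> s = None} = 0 \<and>
        (\<forall>C \<in> sets (borel :: (real \<times> real) measure).
           (\<integral>\<^sup>+ s. indicator {s. \<exists>c\<in>C. \<tau> \<omega> s = Some c} s \<partial>xi \<omega>) = emeasure (eta \<omega>) C))" for \<omega>
  have AEQ: "AE \<omega> in P. Q \<omega>"
    using al bal unfolding allocation_def balances_def Q_def by (intro AE_conjI) auto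
  have "\<exists>\<omega>\<in>space P. Q \<omega>"
  proof (rule ccontr)
    assume nex: "\<not> (\<exists>\<omega>\<in>space P. Q \<omega>)"
    have "AE \<omega> in P. False"
      using AEQ by (rule AE_mp) (rule AE_I2, use nex in blast)
    then show False by (simp add: AE_False)
  qed
  then obtain \<omega> where \<omega>: "\<omega> \<in> space P" and "Q \<omega>" by blast
  then have cov: "\<forall>x y. \<tau> (theta y \<omega>) (x - y) = map_option (\<lambda>t. t - y) (\<tau> \<omega> x)"
    and bl: "\<forall>C \<in> sets (borel :: (real \<times> real) measure).
           (\<integral>\<^sup>+ s. indicator {s. \<exists>c\<in>C. \<tau> \<omega> s = Some c} s \<partial>xi \<omega>) = emeasure (eta \<omega>) C"
    unfolding Q_def by blast+
  have om: "\<omega> \<in> Omega" using \<omega> poisson_law_space[OF P] by simp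
  define S where "S = {y. 0 < \<omega> y}"
  have cS: "countable S" unfolding S_def by (rule countable_supp[OF om])
  have shift: "\<tau> \<omega> (x, y) = map_option (\<lambda>t. t + (x, 0)) (\<tau> \<omega> (0, y))" for x y
  proof -
    have th: "theta (- x, 0) \<omega> = \<omega>" by (simp add: theta_def)
    have "\<tau> (theta (- x, 0) \<omega>) ((0, y) - (- x, 0)) = map_option (\<lambda>t. t - (- x, 0)) (\<tau> \<omega> (0, y))"
      using cov by blast
    moreover have "(\<lambda>t::real\<times>real. t - (- x, 0)) = (\<lambda>t. t + (x, 0))" by (auto simp: fun_eq_iff)
    ultimately show ?thesis by (simp add: th)
  qed
  define Y where "Y = (\<lambda>y. snd (the (\<tau> \<omega> (0, y)))) ` S"
  have cY: "countable Y" unfolding Y_def using cS by simp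
  define C where "C = {c :: real \<times> real. snd c \<notin> Y}"
  have C_borel: "C \<in> sets (borel :: (real \<times> real) measure)"
  proof -
    have "C = UNIV \<times> (UNIV - Y)" by (auto simp: C_def)
    also have "\<dots> \<in> sets (borel \<Otimes>\<^sub>M borel)"
      using countable_borel[OF cY] by (intro pair_measureI) auto
    finally show ?thesis unfolding borel_prod .
  qed
  define T where "T = {s :: real \<times> real. snd s \<notin> S}"
  have T_borel: "T \<in> sets (borel :: (real \<times> real) measure)"
  proof -
    have "T = UNIV \<times> (UNIV - S)" by (auto simp: T_def)
    also have "\<dots> \<in> sets (borel \<Otimes>\<^sub>M borel)"
      using countable_borel[OF cS] by (intro pair_measureI) auto
    finally show ?thesis unfolding borel_prod .
  qed
  have sub: "indicator {s. \<exists>c\<in>C. \<tau> \<omega> s = Some c} s \<le> (indicator T s :: ennreal)" for s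
  proof (cases "snd s \<in> S")
    case True
    obtain x y where s: "s = (x, y)" by (cases s)
    have "\<not> (\<exists>c\<in>C. \<tau> \<omega> s = Some c)"
    proof
      assume "\<exists>c\<in>C. \<tau> \<omega> s = Some c"
      then obtain c where c: "c \<in> C" "\<tau> \<omega> s = Some c" by blast
      then obtain c0 where c0: "\<tau> \<omega> (0, y) = Some c0" "c = c0 + (x, 0)" using shift[of x y] by (auto simp: s)
      have "snd c = snd c0" using c0 by simp
      also have "snd c0 \<in> Y" unfolding Y_def using True c0 s by (auto intro!: image_eqI[where x=y])
      finally show False using c by (simp add: C_def)
    qed
    then show ?thesis by simp
  qed (simp add: T_def indicator_def)
  have "(\<integral>\<^sup>+ s. indicator {s. \<exists>c\<in>C. \<tau> \<omega> s = Some c} s \<partial>xi \<omega>) \<le> (\<integral>\<^sup>+ s. indicator T s \<partial>xi \<omega>)"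
    by (intro nn_integral_mono sub)
  also have "\<dots> = emeasure (xi \<omega>) T" using T_borel by (intro nn_integral_indicator) simp
  also have "\<dots> = xi_fun \<omega> T" using T_borel by (rule emeasure_xi)
  also have "\<dots> = 0" unfolding xi_fun_eq
  proof (intro nn_integral_zero' AE_I2)
    fix y
    show "emeasure lborel {x. (x, y) \<in> T} = 0" if "y \<in> space (count_space {y. 0 < \<omega> y})"
      using that by (simp add: T_def S_def)
  qed
  finally have lhs: "(\<integral>\<^sup>+ s. indicator {s. \<exists>c\<in>C. \<tau> \<omega> s = Some c} s \<partial>xi \<omega>) = 0" by simp
  have "emeasure lborel (UNIV :: (real \<times> real) set) \<le> emeasure lborel C + emeasure lborel ((UNIV :: real set) \<times> Y)"
  proof -
    have "(UNIV :: (real \<times> real) set) = C \<union> ((UNIV :: real set) \<times> Y)" by (auto simp: C_def)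
    moreover have "emeasure lborel (C \<union> ((UNIV :: real set) \<times> Y)) \<le> emeasure lborel C + emeasure lborel ((UNIV :: real set) \<times> Y)"
    proof -
      have "(UNIV :: real set) \<times> Y \<in> sets (borel \<Otimes>\<^sub>M borel)" using countable_borel[OF cY] by (intro pair_measureI) auto
      then have UY: "(UNIV :: real set) \<times> Y \<in> sets (lborel :: (real \<times> real) measure)" unfolding borel_prod by simp
      have Cl: "C \<in> sets (lborel :: (real \<times> real) measure)" using C_borel by simp
      show ?thesis using emeasure_subadditive[OF Cl UY] .
    qed
    ultimately show ?thesis by simp
  qed
  moreover have "emeasure lborel ((UNIV :: real set) \<times> Y) = 0"
  proof -
    have "emeasure (lborel \<Otimes>\<^sub>M lborel) ((UNIV :: real set) \<times> Y) = emeasure (lborel :: real measure) UNIV * emeasure lborel Y"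
      using countable_borel[OF cY] by (intro lborel.emeasure_pair_measure_Times) auto
    also have "emeasure lborel Y = 0" by (rule emeasure_lborel_countable[OF cY])
    finally show ?thesis by (simp add: lborel_prod)
  qed
  ultimately have "emeasure lborel C = \<infinity>" by (simp add: top_unique)
  with bl C_borel lhs show False by (auto simp: eta_def)
qed


lemma prod_lessThan_add:
  "(\<Prod>i<N + M. f i) = (\<Prod>i<N. f i) * (\<Prod>j<M. f (N + j))" for f :: "nat \<Rightarrow> 'a::comm_monoid_mult"
  by (induction M) (simp_all add: ac_simps)

lemma catf_PiE:
  assumes "v \<in> {..<N} \<rightarrow>\<^sub>E (UNIV :: nat set)" "w \<in> {..<M} \<rightarrow>\<^sub>E (UNIV :: nat set)"
  shows "catf N v w \<in> {..<N + M} \<rightarrow>\<^sub>E (UNIV :: nat set)"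
  using assms unfolding catf_def PiE_def extensional_def by auto

lemma catf_inj:
  assumes "v \<in> {..<N} \<rightarrow>\<^sub>E (UNIV :: nat set)" "w \<in> {..<M} \<rightarrow>\<^sub>E (UNIV :: nat set)"
    "v' \<in> {..<N} \<rightarrow>\<^sub>E (UNIV :: nat set)" "w' \<in> {..<M} \<rightarrow>\<^sub>E (UNIV :: nat set)"
    "catf N v w = catf N v' w'"
  shows "v = v' \<and> w = w'"
proof
  show "v = v'"
  proof (rule PiE_ext[OF assms(1,3)])
    fix i assume "i \<in> {..<N}"
    then show "v i = v' i" using fun_cong[OF assms(5), of i] by (simp add: catf_def)
  qed
  show "w = w'"
  proof (rule PiE_ext[OF assms(2,4)])
    fix i assume "i \<in> {..<M}"
    then show "w i = w' i" using fun_cong[OF assms(5), of "N + i"] by (simp add: catf_def)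
  qed
qed

lemma pois_catf: "pois (catf N D D') (catf N v w) (N + M) = pois D v N * pois D' w M"
  unfolding pois_def prod_lessThan_add by (simp add: catf_def)

lemma EgenR_decomp:
  assumes P: "poisson_law P" and X: "X \<in> EgenR R"
  obtains N D V where "\<forall>j<N. D j \<in> sets borel \<and> bounded (D j) \<and> D j \<subseteq> R"
    "disjoint_family_on D {..<N}" "finite V" "V \<subseteq> {..<N} \<rightarrow>\<^sub>E (UNIV :: nat set)"
    "X = (\<Union>v\<in>V. Ev D v N)" "emeasure P X = (\<Sum>v\<in>V. pois D v N)"
proof -
  obtain B k n where Xe: "X = Ev B k n" and B: "\<forall>i<n. B i \<in> sets borel \<and> bounded (B i) \<and> B i \<subseteq> R"
    using X unfolding EgenR_def by blast
  have B': "\<forall>i<n. B i \<in> sets borel \<and> bounded (B i)" using B by blast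
  obtain N D V where D: "\<forall>j<N. D j \<in> sets borel \<and> bounded (D j) \<and> D j \<subseteq> (\<Union>i<n. B i)"
    "disjoint_family_on D {..<N}" "finite V" "V \<subseteq> {..<N} \<rightarrow>\<^sub>E (UNIV :: nat set)"
    "Ev B k n = (\<Union>v\<in>V. Ev D v N)"
    using decomp[OF B', of k] by blast
  have D1: "\<forall>j<N. D j \<in> sets borel \<and> bounded (D j)" using D(1) by blast
  have DR: "\<forall>j<N. D j \<in> sets borel \<and> bounded (D j) \<and> D j \<subseteq> R"
  proof (intro allI impI conjI)
    fix j assume "j < N"
    then show "D j \<in> sets borel" "bounded (D j)" using D1 by auto
    have "D j \<subseteq> (\<Union>i<n. B i)" using D(1) \<open>j < N\<close> by blast
    also have "\<dots> \<subseteq> R" using B by blast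
    finally show "D j \<subseteq> R" .
  qed
  show thesis
  proof (rule that[OF DR D(2,3,4)])
    show "X = (\<Union>v\<in>V. Ev D v N)" using Xe D(5) by simp
    then show "emeasure P X = (\<Sum>v\<in>V. pois D v N)" using poisson_sum[OF P D1 D(2,3,4)] by simp
  qed
qed

lemma indep_EgenR:
  assumes P: "poisson_law P" and R: "R1 \<inter> R2 = {}" and X: "X \<in> EgenR R1" and Y: "Y \<in> EgenR R2"
  shows "emeasure P (X \<inter> Y) = emeasure P X * emeasure P Y"
proof -
  obtain N D V where D: "\<forall>j<N. D j \<in> sets borel \<and> bounded (D j) \<and> D j \<subseteq> R1"
    "disjoint_family_on D {..<N}" "finite V" "V \<subseteq> {..<N} \<rightarrow>\<^sub>E (UNIV :: nat set)"
    "X = (\<Union>v\<in>V. Ev D v N)" "emeasure P X = (\<Sum>v\<in>V. pois D v N)"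
    using EgenR_decomp[OF P X] by blast
  obtain M D' W where D': "\<forall>j<M. D' j \<in> sets borel \<and> bounded (D' j) \<and> D' j \<subseteq> R2"
    "disjoint_family_on D' {..<M}" "finite W" "W \<subseteq> {..<M} \<rightarrow>\<^sub>E (UNIV :: nat set)"
    "Y = (\<Union>w\<in>W. Ev D' w M)" "emeasure P Y = (\<Sum>w\<in>W. pois D' w M)"
    using EgenR_decomp[OF P Y] by blast
  define DD where "DD = catf N D D'"
  define U where "U = (\<lambda>(v, w). catf N v w) ` (V \<times> W)"
  have DD1: "\<forall>j<N + M. DD j \<in> sets borel \<and> bounded (DD j)"
  proof (intro allI impI)
    fix j assume j: "j < N + M"
    show "DD j \<in> sets borel \<and> bounded (DD j)"
    proof (cases "j < N")
      case True then show ?thesis using D(1) by (simp add: DD_def catf_def)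
    next
      case False then have "j - N < M" using j by simp
      then show ?thesis using D'(1) False by (simp add: DD_def catf_def)
    qed
  qed
  have DDdisj: "disjoint_family_on DD {..<N + M}"
    unfolding disjoint_family_on_def
  proof (intro ballI impI)
    fix i j assume ij: "i \<in> {..<N + M}" "j \<in> {..<N + M}" "i \<noteq> j"
    show "DD i \<inter> DD j = {}"
    proof (cases "i < N"; cases "j < N")
      assume "i < N" "j < N" then show ?thesis
        using D(2) ij unfolding disjoint_family_on_def DD_def catf_def by auto
    next
      assume a: "i < N" "\<not> j < N"
      then have "DD i \<subseteq> R1" "DD j \<subseteq> R2" using D(1) D'(1) ij by (auto simp: DD_def catf_def)
      then show ?thesis using R by blast
    next
      assume a: "\<not> i < N" "j < N"
      then have "DD i \<subseteq> R2" "DD j \<subseteq> R1" using D(1) D'(1) ij by (auto simp: DD_def catf_def)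
      then show ?thesis using R by blast
    next
      assume a: "\<not> i < N" "\<not> j < N"
      then have "i - N \<in> {..<M}" "j - N \<in> {..<M}" "i - N \<noteq> j - N" using ij by auto
      then show ?thesis using D'(2) a unfolding disjoint_family_on_def DD_def catf_def by auto
    qed
  qed
  have finU: "finite U" unfolding U_def using D(3) D'(3) by simp
  have U_sub: "U \<subseteq> {..<N + M} \<rightarrow>\<^sub>E (UNIV :: nat set)"
  proof (rule subsetI)
    fix u assume "u \<in> U"
    then obtain vw where "vw \<in> V \<times> W" "u = (\<lambda>(v, w). catf N v w) vw" unfolding U_def by (rule imageE)
    then obtain v w where vw: "v \<in> V" "w \<in> W" "u = catf N v w" by (cases vw) auto
    show "u \<in> {..<N + M} \<rightarrow>\<^sub>E (UNIV :: nat set)"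
      unfolding vw(3) by (rule catf_PiE[OF subsetD[OF D(4) vw(1)] subsetD[OF D'(4) vw(2)]])
  qed
  have inj: "inj_on (\<lambda>(v, w). catf N v w) (V \<times> W)"
  proof (rule inj_onI)
    fix a b assume a: "a \<in> V \<times> W" and b: "b \<in> V \<times> W" and eq: "(\<lambda>(v, w). catf N v w) a = (\<lambda>(v, w). catf N v w) b"
    obtain v w where a': "a = (v, w)" "v \<in> V" "w \<in> W" using a by blast
    obtain v' w' where b': "b = (v', w')" "v' \<in> V" "w' \<in> W" using b by blast
    have "v = v' \<and> w = w'"
      using eq unfolding a'(1) b'(1)
      by (intro catf_inj[OF subsetD[OF D(4) a'(2)] subsetD[OF D'(4) a'(3)] subsetD[OF D(4) b'(2)] subsetD[OF D'(4) b'(3)]]) simp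
    then show "a = b" using a'(1) b'(1) by simp
  qed
  have "X \<inter> Y = (\<Union>(v, w)\<in>V \<times> W. Ev D v N \<inter> Ev D' w M)" unfolding D(5) D'(5) by blast
  also have "\<dots> = (\<Union>(v, w)\<in>V \<times> W. Ev DD (catf N v w) (N + M))" unfolding Ev_Int DD_def by simp
  also have "\<dots> = (\<Union>u\<in>U. Ev DD u (N + M))" unfolding U_def by auto
  finally have XY: "X \<inter> Y = (\<Union>u\<in>U. Ev DD u (N + M))" .
  have "emeasure P (X \<inter> Y) = (\<Sum>u\<in>U. pois DD u (N + M))"
    unfolding XY by (rule poisson_sum[OF P DD1 DDdisj finU U_sub])
  also have "\<dots> = (\<Sum>(v, w)\<in>V \<times> W. pois DD (catf N v w) (N + M))"
    unfolding U_def by (subst sum.reindex[OF inj]) (simp add: case_prod_unfold)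
  also have "\<dots> = (\<Sum>(v, w)\<in>V \<times> W. pois D v N * pois D' w M)"
    unfolding DD_def pois_catf ..
  also have "\<dots> = (\<Sum>v\<in>V. pois D v N) * (\<Sum>w\<in>W. pois D' w M)"
    by (simp add: sum_product sum.cartesian_product)
  finally show ?thesis using D(6) D'(6) by simp
qed

lemma indep_sigma_EgenR:
  assumes P: "poisson_law P" and R: "R1 \<inter> R2 = {}"
    and X: "X \<in> sigma_sets Omega (EgenR R1)" and Y: "Y \<in> sigma_sets Omega (EgenR R2)"
  shows "measure P (X \<inter> Y) = measure P X * measure P Y"
proof -
  interpret prob_space P by (rule poisson_law_prob[OF P])
  have sP: "sets P = sets OmegaM" by (rule poisson_law_sets[OF P])
  have spP: "space P = Omega" by (rule poisson_law_space[OF P])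
  have ev: "EgenR R \<subseteq> events" for R using EgenR_sets sP by blast
  have "indep_set (EgenR R1) (EgenR R2)"
    unfolding indep_sets2_eq
  proof (intro conjI ev ballI)
    fix a b assume a: "a \<in> EgenR R1" and b: "b \<in> EgenR R2"
    have "emeasure P (a \<inter> b) = emeasure P a * emeasure P b" by (rule indep_EgenR[OF P R a b])
    then show "prob (a \<inter> b) = prob a * prob b"
      by (simp add: measure_def enn2real_mult)
  qed
  then have "indep_set (sigma_sets (space P) (EgenR R1)) (sigma_sets (space P) (EgenR R2))"
    by (rule indep_set_sigma_sets[OF _ Int_stable_EgenR Int_stable_EgenR])
  then have "\<forall>a\<in>sigma_sets (space P) (EgenR R1). \<forall>b\<in>sigma_sets (space P) (EgenR R2). prob (a \<inter> b) = prob a * prob b"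
    unfolding indep_sets2_eq by (elim conjE)
  from this[unfolded spP, rule_format, OF X Y] show ?thesis .
qed


definition symd :: "'a set \<Rightarrow> 'a set \<Rightarrow> 'a set" where "symd A B = (A - B) \<union> (B - A)"

lemma sigma_EgenR_sets: "sigma_sets Omega (EgenR R) \<subseteq> sets OmegaM"
  using sets.sigma_sets_subset'[OF EgenR_sets, of Omega] sets.top[of OmegaM] by simp

lemma EgenR_bounded_in:
  assumes "A \<in> EgenR UNIV"
  shows "\<exists>m::nat. A \<in> EgenR {- real m..real m}"
proof -
  obtain B k n where A: "A = Ev B k n" and B: "\<forall>i<n. B i \<in> sets borel \<and> bounded (B i)"
    using assms unfolding EgenR_def by blast
  have "bounded (\<Union>i<n. B i)" using B by (intro bounded_UN) auto
  then obtain c where "(\<Union>i<n. B i) \<subseteq> cbox (- c) c" using bounded_subset_cbox_symmetric by blast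
  then have c: "(\<Union>i<n. B i) \<subseteq> {- c..c}" by simp
  obtain m :: nat where "c \<le> real m" using real_arch_simple by blast
  then have "{- c..c} \<subseteq> {- real m..real m}" by auto
  with c have "\<forall>i<n. B i \<subseteq> {- real m..real m}" by blast
  then have "A \<in> EgenR {- real m..real m}" unfolding EgenR_def A using B by blast
  then show ?thesis by blast
qed

lemma sigma_EgenR_mono: "m \<le> m' \<Longrightarrow> sigma_sets Omega (EgenR {- real m..real m}) \<subseteq> sigma_sets Omega (EgenR {- real m'..real m'})"
  by (intro sigma_sets_mono' EgenR_mono) auto

lemma approx:
  assumes P: "poisson_law P" and A: "A \<in> sigma_sets Omega (EgenR UNIV)"
  shows "\<forall>e>0. \<exists>m::nat. \<exists>X\<in>sigma_sets Omega (EgenR {- real m..real m}). measure P (symd A X) < e"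
  using Int_stable_EgenR EgenR_Pow A
proof (induct rule: sigma_sets_induct_disjoint)
  case (basic A)
  then obtain m :: nat where "A \<in> EgenR {- real m..real m}" using EgenR_bounded_in by blast
  then have "A \<in> sigma_sets Omega (EgenR {- real m..real m})" by (rule sigma_sets.Basic)
  then show ?case by (intro allI impI exI[where x=m] bexI[where x=A]) (simp_all add: symd_def)
next
  case empty
  show ?case by (intro allI impI exI[where x=0] bexI[where x="{}"]) (simp_all add: symd_def sigma_sets.Empty)
next
  case (compl A)
  show ?case
  proof (intro allI impI)
    fix e :: real assume "0 < e"
    then obtain m X where X: "X \<in> sigma_sets Omega (EgenR {- real m..real m})" "measure P (symd A X) < e"
      using compl(2) by blast
    have "A \<subseteq> Omega" using sigma_sets_into_sp[OF EgenR_Pow compl(1)] .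
    moreover have "X \<subseteq> Omega" using sigma_sets_into_sp[OF EgenR_Pow X(1)] .
    ultimately have "symd (Omega - A) (Omega - X) = symd A X" by (auto simp: symd_def)
    moreover have "Omega - X \<in> sigma_sets Omega (EgenR {- real m..real m})" using X(1) by (rule sigma_sets.Compl)
    ultimately show "\<exists>m::nat. \<exists>X\<in>sigma_sets Omega (EgenR {- real m..real m}). measure P (symd (Omega - A) X) < e"
      using X(2) by metis
  qed
next
  case (union A)
  interpret prob_space P by (rule poisson_law_prob[OF P])
  have sP: "sets P = sets OmegaM" by (rule poisson_law_sets[OF P])
  have sPE: "sets P = sigma_sets Omega (EgenR UNIV)" using sP sets_OmegaM_Egen by simp
  have Aev: "A i \<in> events" for i using union(2) sPE by blast
  have sgev: "sigma_sets Omega (EgenR R) \<subseteq> events" for R using sigma_EgenR_sets sP by simp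
  show ?case
  proof (intro allI impI)
    fix e :: real assume e: "0 < e"
    have "(\<lambda>i. prob (A i)) sums prob (\<Union>i. A i)"
      using Aev union(1) by (intro finite_measure_UNION) auto
    then have "(\<lambda>M. \<Sum>i<M. prob (A i)) \<longlonglongrightarrow> prob (\<Union>i. A i)" by (simp add: sums_def)
    then have "eventually (\<lambda>M. dist (\<Sum>i<M. prob (A i)) (prob (\<Union>i. A i)) < e / 2) sequentially"
      using e by (intro tendstoD) auto
    then obtain M where M: "dist (\<Sum>i<M. prob (A i)) (prob (\<Union>i. A i)) < e / 2"
      by (auto simp: eventually_sequentially)
    define e' where "e' = e / (2 * (real M + 1))"
    have e'pos: "0 < e'" using e by (simp add: e'_def)
    have "\<forall>i. \<exists>m::nat. \<exists>X\<in>sigma_sets Omega (EgenR {- real m..real m}). prob (symd (A i) X) < e'"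
      using union(3) e'pos by blast
    then obtain mm where "\<forall>i. \<exists>X\<in>sigma_sets Omega (EgenR {- real (mm i)..real (mm i)}). prob (symd (A i) X) < e'"
      by metis
    then obtain XX where XX: "\<And>i. XX i \<in> sigma_sets Omega (EgenR {- real (mm i)..real (mm i)})"
      "\<And>i. prob (symd (A i) (XX i)) < e'"
      by metis
    define K where "K = (\<Sum>i<M. mm i)"
    have XXK: "XX i \<in> sigma_sets Omega (EgenR {- real K..real K})" if "i < M" for i
    proof -
      have "mm i \<le> K" unfolding K_def using that by (intro member_le_sum) auto
      then show ?thesis using sigma_EgenR_mono XX(1) by blast
    qed
    define X where "X = (\<Union>i\<in>{..<M}. XX i)"
    interpret sa: sigma_algebra Omega "sigma_sets Omega (EgenR {- real K..real K})"
      by (rule sigma_algebra_sigma_sets[OF EgenR_Pow])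
    have X: "X \<in> sigma_sets Omega (EgenR {- real K..real K})"
      unfolding X_def using XXK by (intro sa.finite_UN) auto
    have XXev: "XX i \<in> events" for i using XX(1) sgev by blast
    have Xev: "X \<in> events" using X sgev by blast
    let ?T = "(\<Union>i. A i) - (\<Union>i\<in>{..<M}. A i)"
    have Tev: "?T \<in> events" using Aev by auto
    have sdev: "symd (A i) (XX i) \<in> events" for i using Aev XXev by (auto simp: symd_def)
    have sub: "symd (\<Union>i. A i) X \<subseteq> (\<Union>i\<in>{..<M}. symd (A i) (XX i)) \<union> ?T"
    proof
      fix x assume x: "x \<in> symd (\<Union>i. A i) X"
      show "x \<in> (\<Union>i\<in>{..<M}. symd (A i) (XX i)) \<union> ?T"
      proof (cases "x \<in> X")
        case True
        then obtain i where i: "i < M" "x \<in> XX i" unfolding X_def by blast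
        with x True have "x \<notin> A i" by (auto simp: symd_def)
        with i show ?thesis by (auto simp: symd_def)
      next
        case False
        with x obtain j where j: "x \<in> A j" by (auto simp: symd_def)
        show ?thesis
        proof (cases "j < M")
          case True
          with False have "x \<notin> XX j" unfolding X_def by blast
          with j True show ?thesis by (auto simp: symd_def)
        next
          case jM: False
          have "x \<notin> A i" if "i < M" for i
          proof
            assume "x \<in> A i"
            moreover have "i \<noteq> j" using that jM by auto
            ultimately show False using j union(1) unfolding disjoint_family_on_def by blast
          qed
          with j show ?thesis by blast
        qed
      qed
    qed
    have "prob (symd (\<Union>i. A i) X) \<le> prob ((\<Union>i\<in>{..<M}. symd (A i) (XX i)) \<union> ?T)"
      using sub sdev Tev by (intro finite_measure_mono) auto
    also have "\<dots> \<le> prob (\<Union>i\<in>{..<M}. symd (A i) (XX i)) + prob ?T"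
      using sdev Tev by (intro measure_Un_le) auto
    also have "prob (\<Union>i\<in>{..<M}. symd (A i) (XX i)) \<le> (\<Sum>i<M. prob (symd (A i) (XX i)))"
      using sdev by (intro measure_UNION_le) auto
    also have "\<dots> \<le> (\<Sum>i<M. e')" using XX(2) by (intro sum_mono) (simp add: less_imp_le)
    also have "\<dots> = real M * e'" by simp
    also have "real M * e' < e / 2"
    proof -
      have "real M * e' = e / 2 * (real M / (real M + 1))" by (simp add: e'_def field_simps)
      also have "\<dots> < e / 2 * 1" using e by (intro mult_strict_left_mono) auto
      finally show ?thesis by simp
    qed
    also have "prob ?T = prob (\<Union>i. A i) - prob (\<Union>i\<in>{..<M}. A i)"
      using Aev by (intro finite_measure_Diff) auto
    also have "prob (\<Union>i\<in>{..<M}. A i) = (\<Sum>i<M. prob (A i))"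
      using Aev union(1) by (intro finite_measure_finite_Union) (auto intro: disjoint_family_on_mono)
    finally have "prob (symd (\<Union>i. A i) X) < e / 2 + (prob (\<Union>i. A i) - (\<Sum>i<M. prob (A i)))" by simp
    also have "\<dots> < e / 2 + e / 2" using M unfolding dist_real_def by (simp only: abs_less_iff) linarith
    finally have "prob (symd (\<Union>i. A i) X) < e" by simp
    then show "\<exists>m::nat. \<exists>X\<in>sigma_sets Omega (EgenR {- real m..real m}). prob (symd (\<Union>i. A i) X) < e"
      using X by blast
  qed
qed

lemma theta_EgenR:
  assumes "A \<in> EgenR R"
  shows "theta z -` A \<inter> Omega \<in> EgenR ((\<lambda>x. x + snd z) ` R)"
proof -
  obtain B k n where A: "A = Ev B k n" and B: "\<forall>i<n. B i \<in> sets borel \<and> bounded (B i) \<and> B i \<subseteq> R"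
    using assms unfolding EgenR_def by blast
  have B': "\<forall>i<n. (\<lambda>x. x + snd z) ` B i \<in> sets borel \<and> bounded ((\<lambda>x. x + snd z) ` B i) \<and> (\<lambda>x. x + snd z) ` B i \<subseteq> (\<lambda>x. x + snd z) ` R"
  proof (intro allI impI conjI)
    fix i assume i: "i < n"
    then show "(\<lambda>x. x + snd z) ` B i \<in> sets borel" using B borel_translate by blast
    have "(\<lambda>x. x + snd z) ` B i = (\<lambda>x. snd z + x) ` B i" by (simp add: add.commute)
    then show "bounded ((\<lambda>x. x + snd z) ` B i)" using B i bounded_translation by metis
    show "(\<lambda>x. x + snd z) ` B i \<subseteq> (\<lambda>x. x + snd z) ` R" using B i by blast
  qed
  have "theta z -` A \<inter> Omega = Ev (\<lambda>i. (\<lambda>x. x + snd z) ` B i) k n" unfolding A by (rule theta_vimage_Ev)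
  then show ?thesis unfolding EgenR_def using B' by blast
qed

lemma theta_sigma_EgenR:
  assumes X: "X \<in> sigma_sets Omega (EgenR R)"
  shows "theta z -` X \<inter> Omega \<in> sigma_sets Omega (EgenR ((\<lambda>x. x + snd z) ` R))"
proof -
  have f: "theta z \<in> Omega \<rightarrow> Omega" using theta_Omega by blast
  have "theta z -` X \<inter> Omega \<in> {theta z -` A \<inter> Omega | A. A \<in> sigma_sets Omega (EgenR R)}" using X by blast
  also have "\<dots> = sigma_sets Omega {theta z -` A \<inter> Omega | A. A \<in> EgenR R}"
    by (rule sigma_sets_vimage_commute[OF f])
  also have "\<dots> \<subseteq> sigma_sets Omega (EgenR ((\<lambda>x. x + snd z) ` R))"
    by (rule sigma_sets_mono') (use theta_EgenR in blast)
  finally show ?thesis .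
qed

lemma (in prob_space) prob_diff_le_symd:
  assumes "S \<in> events" "T \<in> events"
  shows "\<bar>prob S - prob T\<bar> \<le> prob (symd S T)"
proof -
  have sd: "symd S T \<in> events" using assms by (auto simp: symd_def)
  have "prob S \<le> prob (T \<union> symd S T)" using assms sd by (intro finite_measure_mono) (auto simp: symd_def)
  also have "\<dots> \<le> prob T + prob (symd S T)" using assms sd by (intro measure_Un_le) auto
  finally have 1: "prob S \<le> prob T + prob (symd S T)" .
  have "prob T \<le> prob (S \<union> symd S T)" using assms sd by (intro finite_measure_mono) (auto simp: symd_def)
  also have "\<dots> \<le> prob S + prob (symd S T)" using assms sd by (intro measure_Un_le) auto
  finally have 2: "prob T \<le> prob S + prob (symd S T)" .
  from 1 2 show ?thesis by linarith
qed

lemma flow_ergodic_P: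
  assumes P: "poisson_law P"
  shows "flow_ergodic P"
  unfolding flow_ergodic_def
proof (intro ballI impI)
  fix A assume A: "A \<in> sets OmegaM" and inv: "\<forall>z. theta z -` A \<inter> Omega = A"
  interpret prob_space P by (rule poisson_law_prob[OF P])
  have sP: "sets P = sets OmegaM" by (rule poisson_law_sets[OF P])
  have spP: "space P = Omega" by (rule poisson_law_space[OF P])
  have Aev: "A \<in> events" using A sP by simp
  have sgev: "sigma_sets Omega (EgenR R) \<subseteq> events" for R using sigma_EgenR_sets sP by simp
  have stat: "prob (theta z -` S \<inter> Omega) = prob S" if S: "S \<in> sets OmegaM" for S z
  proof -
    have mt: "theta z \<in> P \<rightarrow>\<^sub>M OmegaM"
      using theta_measurable measurable_cong_sets[OF sP refl] by blast
    have "distr P OmegaM (theta z) = P" using flow_stationary_P[OF P] unfolding flow_stationary_def by blast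
    then have "prob S = measure (distr P OmegaM (theta z)) S" by simp
    also have "\<dots> = prob (theta z -` S \<inter> space P)" by (rule measure_distr[OF mt S])
    finally show ?thesis by (simp add: spP)
  qed
  let ?p = "prob A"
  have key: "\<bar>?p - ?p * ?p\<bar> \<le> 4 * e" if e: "0 < e" for e
  proof -
    have "A \<in> sigma_sets Omega (EgenR UNIV)" using A sets_OmegaM_Egen by simp
    then obtain m :: nat and X where X: "X \<in> sigma_sets Omega (EgenR {- real m..real m})"
      and AX: "prob (symd A X) < e"
      using approx[OF P] e by blast
    define b where "b = 2 * real m + 1"
    define z where "z = (0::real, b)"
    define X' where "X' = theta z -` X \<inter> Omega"
    have X': "X' \<in> sigma_sets Omega (EgenR ((\<lambda>x. x + b) ` {- real m..real m}))"
      unfolding X'_def using theta_sigma_EgenR[OF X, of z] by (simp add: z_def)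
    have disj: "{- real m..real m} \<inter> (\<lambda>x. x + b) ` {- real m..real m} = {}" by (auto simp: b_def)
    have Xev: "X \<in> events" using X sgev by blast
    have X'ev: "X' \<in> events" using X' sgev by blast
    have XO: "X \<in> sets OmegaM" using Xev sP by simp
    have ind: "prob (X \<inter> X') = prob X * prob X'"
      by (rule indep_sigma_EgenR[OF P disj X X'])
    have pX': "prob X' = prob X" unfolding X'_def by (rule stat[OF XO])
    have sdA: "symd A X \<in> sets OmegaM" using Aev Xev sP by (auto simp: symd_def)
    have "symd A X' = theta z -` symd A X \<inter> Omega"
      using inv[rule_format, of z] unfolding X'_def symd_def by blast
    then have "prob (symd A X') = prob (symd A X)" using stat[OF sdA] by simp
    then have AX': "prob (symd A X') < e" using AX by simp
    have "symd A (X \<inter> X') \<subseteq> symd A X \<union> symd A X'" by (auto simp: symd_def)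
    then have "prob (symd A (X \<inter> X')) \<le> prob (symd A X \<union> symd A X')"
      using Aev Xev X'ev by (intro finite_measure_mono) (auto simp: symd_def)
    also have "\<dots> \<le> prob (symd A X) + prob (symd A X')"
      using Aev Xev X'ev by (intro measure_Un_le) (auto simp: symd_def)
    finally have s2: "prob (symd A (X \<inter> X')) < 2 * e" using AX AX' by linarith
    have d1: "\<bar>?p - prob (X \<inter> X')\<bar> \<le> prob (symd A (X \<inter> X'))"
      using Aev Xev X'ev by (intro prob_diff_le_symd) auto
    have d2: "\<bar>?p - prob X\<bar> \<le> prob (symd A X)"
      using Aev Xev by (intro prob_diff_le_symd) auto
    let ?q = "prob X"
    have q: "prob (X \<inter> X') = ?q * ?q" using ind pX' by simp
    have p01: "0 \<le> ?p" "?p \<le> 1" "0 \<le> ?q" "?q \<le> 1" by auto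
    have "?q * ?q - ?p * ?p = (?q - ?p) * (?q + ?p)" by (simp add: algebra_simps)
    then have "\<bar>?q * ?q - ?p * ?p\<bar> = \<bar>?q - ?p\<bar> * \<bar>?q + ?p\<bar>" by (simp only: abs_mult)
    also have "\<dots> \<le> e * 2"
    proof (rule mult_mono)
      show "\<bar>?q - ?p\<bar> \<le> e" using d2 AX by (simp add: abs_minus_commute)
      have "?q + ?p \<le> 2" "0 \<le> ?q + ?p" using p01 by linarith+
      then show "\<bar>?q + ?p\<bar> \<le> 2" by simp
    qed (use e in auto)
    finally have d3: "\<bar>?q * ?q - ?p * ?p\<bar> \<le> 2 * e" by simp
    show ?thesis using d1 s2 d3 q by linarith
  qed
  have "?p = ?p * ?p"
  proof (rule ccontr)
    assume ne: "?p \<noteq> ?p * ?p"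
    then have "0 < \<bar>?p - ?p * ?p\<bar> / 8" by simp
    from key[OF this] have "\<bar>?p - ?p * ?p\<bar> \<le> \<bar>?p - ?p * ?p\<bar> / 2" by simp
    then show False using ne by simp
  qed
  then have "?p * (1 - ?p) = 0" by (simp add: algebra_simps)
  then show "measure P A = 0 \<or> measure P A = 1" by simp
qed

theorem mainTheorem10:
  assumes "poisson_law P"
  shows "random_measure xi \<and> random_measure eta \<and>
         diffuse xi \<and> diffuse eta \<and>
         flow_adapted xi \<and> flow_adapted eta \<and>
         flow_stationary P \<and> jointly_stationary P xi eta \<and> flow_ergodic P \<and>
         has_intensity P xi 1 \<and> has_intensity P eta 1 \<and>
         \<not> (\<exists>\<tau>. allocation P \<tau> \<and> balances P \<tau> xi eta)"
  by (intro conjI random_measure_xi[OF assms] random_measure_eta diffuse_xi diffuse_eta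
      flow_adapted_xi flow_adapted_eta flow_stationary_P[OF assms] jointly_stationary_P[OF assms]
      flow_ergodic_P[OF assms] has_intensity_xi[OF assms] has_intensity_eta[OF assms] no_balancing[OF assms])


end
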